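(* Let $E$ be a (real or complex, $\mathbb{F}\in\{\mathbb{R},\mathbb{C}\}$) nc base norm space with nc base $K$ and base function $f_1$, and let $n\in\mathbb{N}$. Then for selfadjoint $x\in M_n(E)$, $$\|x\|_n=\inf\{\|\alpha_1^*\alpha_1+\alpha_2^*\alpha_2\| : \alpha_i\in M_n(\mathbb{F}),\ x_i\in K_n,\ x=\alpha_1^*x_1\alpha_1-\alpha_2^*x_2\alpha_2\}.$$ Also $\|x\|_n=\|f_1^{(n)}(x)\|$ for all $x\in M_n(E)_+$. Moreover $K_n=\{x\in M_n(E)_+ : f_1^{(n)}(x)=I_n\}$.
   Context: A $*$-vector space over $\mathbb{F}$ has an involution (conjugate linear if $\mathbb{F}=\mathbb{C}$); $M_n(E)$ has involution $[x_{ij}]^*=[x_{ji}^*]$. A matrix ordered space: proper cones $M_n(E)_+\subseteq M_n(E)_{\rm sa}$ with $\alpha^*M_n(E)_+\alpha\subseteq M_m(E)_+$ for $\alpha\in M_{n,m}(\mathbb{F})$. Matrix ordered matrix normed: norms $\|\cdot\|_n$ on $M_n(E)$, cones closed, $\|x^*\|_n=\|x\|_n$. A matrix convex set $K=(K_n)$ is closed under direct sums and compressions $a^*xa$ by isometries $a\in M_{n,m}(\mathbb{F})$. $f^{(n)}[x_{ij}]=[f(x_{ij})]$. A nc base norm space is a matrix ordered matrix normed $*$-vector space $E$ which is an operator space, with a matrix convex set $K$ such that: (i) $K_n\subseteq M_n(E)_+$, $\|k\|_n\le 1$ for $k\in K_n$; (ii) each $K_n$ closed; (iii) for every $t>1$,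 every $x\in M_n(E)_{\rm sa}$ with $\|x\|_n\le1$ is $c_1x_1c_1-c_2x_2c_2$ with positive $c_i\in M_n(\mathbb{F})$, $c_1^2+c_2^2\le tI_n$, $x_i\in K_n$; (iv) there is a continuous positive linear functional $f_1$ on $E$ (selfadjoint in the real case), the base function, with $K_n=\{x\in M_n(E)_+:f_1^{(n)}(x)=I_n\}$ for all $n$. $K$ is then called the nc base. *)

theory Defs
  imports Complex_Main "Jordan_Normal_Form.Matrix"
begin

text \<open>Scalars: a field 'k (instantiated with real or complex) with an involution cj
 (id for real, cnj for complex).\<close>

definition adjm :: "('k \<Rightarrow> 'k) \<Rightarrow> 'k mat \<Rightarrow> 'k mat" where
  "adjm cj A = mat (dim_col A) (dim_row A) (\<lambda>(i,j). cj (A $$ (j,i)))"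

definition vnorm :: "'k::real_normed_field vec \<Rightarrow> real" where
  "vnorm v = sqrt (\<Sum>i<dim_vec v. (norm (v $ i))\<^sup>2)"

definition opnorm :: "'k::real_normed_field mat \<Rightarrow> real" where
  "opnorm A = Sup {vnorm (A *\<^sub>v v) | v. v \<in> carrier_vec (dim_col A) \<and> vnorm v \<le> 1}"

definition psd_mat :: "('k::real_normed_field \<Rightarrow> 'k) \<Rightarrow> nat \<Rightarrow> 'k mat \<Rightarrow> bool" where
  "psd_mat cj n A \<longleftrightarrow> A \<in> carrier_mat n n \<and> adjm cj A = A \<and>
     (\<forall>v \<in> carrier_vec n. \<exists>r::real. r \<ge> 0 \<and>
        (\<Sum>i<n. cj (v $ i) * (A *\<^sub>v v) $ i) = of_real r)"

definition isometry_mat :: "('k::real_normed_field \<Rightarrow> 'k) \<Rightarrow> nat \<Rightarrow> nat \<Rightarrow> 'k mat \<Rightarrow> bool" where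
  "isometry_mat cj n m a \<longleftrightarrow> a \<in> carrier_mat n m \<and> adjm cj a * a = 1\<^sub>m m"

definition mstar :: "('e \<Rightarrow> 'e) \<Rightarrow> 'e mat \<Rightarrow> 'e mat" where
  "mstar sinv X = mat (dim_col X) (dim_row X) (\<lambda>(i,j). sinv (X $$ (j,i)))"

definition lmul :: "('k \<Rightarrow> 'e::comm_monoid_add \<Rightarrow> 'e) \<Rightarrow> 'k mat \<Rightarrow> 'e mat \<Rightarrow> 'e mat" where
  "lmul scale A X = mat (dim_row A) (dim_col X)
     (\<lambda>(i,j). \<Sum>p<dim_col A. scale (A $$ (i,p)) (X $$ (p,j)))"

definition rmul :: "('k \<Rightarrow> 'e::comm_monoid_add \<Rightarrow> 'e) \<Rightarrow> 'e mat \<Rightarrow> 'k mat \<Rightarrow> 'e mat" where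
  "rmul scale X B = mat (dim_row X) (dim_col B)
     (\<lambda>(i,j). \<Sum>q<dim_row B. scale (B $$ (q,j)) (X $$ (i,q)))"

definition bimul :: "('k \<Rightarrow> 'e::comm_monoid_add \<Rightarrow> 'e) \<Rightarrow> 'k mat \<Rightarrow> 'e mat \<Rightarrow> 'k mat \<Rightarrow> 'e mat" where
  "bimul scale A X B = rmul scale (lmul scale A X) B"

definition compress :: "('k \<Rightarrow> 'e::comm_monoid_add \<Rightarrow> 'e) \<Rightarrow> ('k \<Rightarrow> 'k) \<Rightarrow> 'k mat \<Rightarrow> 'e mat \<Rightarrow> 'e mat" where
  "compress scale cj A X = bimul scale (adjm cj A) X A"

definition msmul :: "('k \<Rightarrow> 'e \<Rightarrow> 'e) \<Rightarrow> 'k \<Rightarrow> 'e mat \<Rightarrow> 'e mat" where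
  "msmul scale c X = map_mat (scale c) X"

definition dsum :: "'e::zero mat \<Rightarrow> 'e mat \<Rightarrow> 'e mat" where
  "dsum X Y = four_block_mat X (0\<^sub>m (dim_row X) (dim_col Y)) (0\<^sub>m (dim_row Y) (dim_col X)) Y"

definition sa_mats :: "('e \<Rightarrow> 'e) \<Rightarrow> nat \<Rightarrow> 'e mat set" where
  "sa_mats sinv n = {X \<in> carrier_mat n n. mstar sinv X = X}"

definition m1 :: "'e \<Rightarrow> 'e mat" where
  "m1 x = mat 1 1 (\<lambda>_. x)"

definition star_vector_space ::
  "('k::field \<Rightarrow> 'e::ab_group_add \<Rightarrow> 'e) \<Rightarrow> ('k \<Rightarrow> 'k) \<Rightarrow> ('e \<Rightarrow> 'e) \<Rightarrow> bool" where
  "star_vector_space scale cj sinv \<longleftrightarrow> vector_space scale \<and>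
     (\<forall>x. sinv (sinv x) = x) \<and> (\<forall>x y. sinv (x + y) = sinv x + sinv y) \<and>
     (\<forall>c x. sinv (scale c x) = scale (cj c) (sinv x))"

definition matrix_normed ::
  "('k::real_normed_field \<Rightarrow> 'e::ab_group_add \<Rightarrow> 'e) \<Rightarrow> (nat \<Rightarrow> 'e mat \<Rightarrow> real) \<Rightarrow> bool" where
  "matrix_normed scale nrm \<longleftrightarrow> (\<forall>n>0.
     (\<forall>X \<in> carrier_mat n n. nrm n X \<ge> 0 \<and> (nrm n X = 0 \<longleftrightarrow> X = 0\<^sub>m n n)) \<and>
     (\<forall>X \<in> carrier_mat n n. \<forall>Y \<in> carrier_mat n n. nrm n (X + Y) \<le> nrm n X + nrm n Y) \<and>
     (\<forall>X \<in> carrier_mat n n. \<forall>c. nrm n (msmul scale c X) = norm c * nrm n X))"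

definition operator_space ::
  "('k::real_normed_field \<Rightarrow> 'e::ab_group_add \<Rightarrow> 'e) \<Rightarrow> (nat \<Rightarrow> 'e mat \<Rightarrow> real) \<Rightarrow> bool" where
  "operator_space scale nrm \<longleftrightarrow> matrix_normed scale nrm \<and>
     (\<forall>n>0. \<forall>m>0. \<forall>A \<in> carrier_mat m n. \<forall>X \<in> carrier_mat n n. \<forall>B \<in> carrier_mat n m.
        nrm m (bimul scale A X B) \<le> opnorm A * nrm n X * opnorm B) \<and>
     (\<forall>n>0. \<forall>m>0. \<forall>X \<in> carrier_mat n n. \<forall>Y \<in> carrier_mat m m.
        nrm (n + m) (dsum X Y) = max (nrm n X) (nrm m Y))"

definition closed_in_nrm :: "(nat \<Rightarrow> 'e::ab_group_add mat \<Rightarrow> real) \<Rightarrow> nat \<Rightarrow> 'e mat set \<Rightarrow> bool" where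
  "closed_in_nrm nrm n S \<longleftrightarrow> (\<forall>s X. (\<forall>k. s k \<in> S) \<and> X \<in> carrier_mat n n \<and>
      (\<lambda>k. nrm n (s k - X)) \<longlonglongrightarrow> 0 \<longrightarrow> X \<in> S)"

definition matrix_ordered ::
  "('k::real_normed_field \<Rightarrow> 'e::ab_group_add \<Rightarrow> 'e) \<Rightarrow> ('k \<Rightarrow> 'k) \<Rightarrow> ('e \<Rightarrow> 'e)
     \<Rightarrow> (nat \<Rightarrow> 'e mat set) \<Rightarrow> bool" where
  "matrix_ordered scale cj sinv pos \<longleftrightarrow>
     (\<forall>n>0. pos n \<subseteq> sa_mats sinv n \<and>
        (\<forall>X \<in> pos n. \<forall>Y \<in> pos n. X + Y \<in> pos n) \<and>
        (\<forall>X \<in> pos n. \<forall>r::real. r \<ge> 0 \<longrightarrow> msmul scale (of_real r) X \<in> pos n) \<and>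
        (\<forall>X \<in> pos n. - X \<in> pos n \<longrightarrow> X = 0\<^sub>m n n)) \<and>
     (\<forall>n>0. \<forall>m>0. \<forall>A \<in> carrier_mat n m. \<forall>X \<in> pos n. compress scale cj A X \<in> pos m)"

definition matrix_convex ::
  "('k::real_normed_field \<Rightarrow> 'e::ab_group_add \<Rightarrow> 'e) \<Rightarrow> ('k \<Rightarrow> 'k) \<Rightarrow> (nat \<Rightarrow> 'e mat set) \<Rightarrow> bool" where
  "matrix_convex scale cj K \<longleftrightarrow>
     (\<forall>n>0. K n \<subseteq> carrier_mat n n) \<and>
     (\<forall>n>0. \<forall>m>0. \<forall>X \<in> K n. \<forall>Y \<in> K m. dsum X Y \<in> K (n + m)) \<and>
     (\<forall>n>0. \<forall>m>0. \<forall>a X. isometry_mat cj n m a \<and> X \<in> K n \<longrightarrow> compress scale cj a X \<in> K m)"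

definition nc_base_norm_space ::
  "('k::real_normed_field \<Rightarrow> 'e::ab_group_add \<Rightarrow> 'e) \<Rightarrow> ('k \<Rightarrow> 'k) \<Rightarrow> ('e \<Rightarrow> 'e)
    \<Rightarrow> (nat \<Rightarrow> 'e mat \<Rightarrow> real) \<Rightarrow> (nat \<Rightarrow> 'e mat set) \<Rightarrow> (nat \<Rightarrow> 'e mat set)
    \<Rightarrow> ('e \<Rightarrow> 'k) \<Rightarrow> bool" where
  "nc_base_norm_space scale cj sinv nrm pos K f \<longleftrightarrow>
     star_vector_space scale cj sinv \<and>
     matrix_ordered scale cj sinv pos \<and>
     operator_space scale nrm \<and>
     (\<forall>n>0. closed_in_nrm nrm n (pos n)) \<and>
     (\<forall>n>0. \<forall>X \<in> carrier_mat n n. nrm n (mstar sinv X) = nrm n X) \<and>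
     matrix_convex scale cj K \<and>
     \<comment> \<open>(i)\<close>
     (\<forall>n>0. K n \<subseteq> pos n \<and> (\<forall>X \<in> K n. nrm n X \<le> 1)) \<and>
     \<comment> \<open>(ii)\<close>
     (\<forall>n>0. closed_in_nrm nrm n (K n)) \<and>
     \<comment> \<open>(iii)\<close>
     (\<forall>t::real. t > 1 \<longrightarrow> (\<forall>n>0. \<forall>X \<in> sa_mats sinv n. nrm n X \<le> 1 \<longrightarrow>
        (\<exists>c1 c2 X1 X2. psd_mat cj n c1 \<and> psd_mat cj n c2 \<and>
           psd_mat cj n (of_real t \<cdot>\<^sub>m 1\<^sub>m n - (c1 * c1 + c2 * c2)) \<and>
           X1 \<in> K n \<and> X2 \<in> K n \<and>
           X = bimul scale c1 X1 c1 - bimul scale c2 X2 c2))) \<and>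
     \<comment> \<open>(iv): f continuous, linear, positive (and selfadjoint)\<close>
     (\<forall>x y. f (x + y) = f x + f y) \<and> (\<forall>c x. f (scale c x) = c * f x) \<and>
     (\<exists>C. \<forall>x. norm (f x) \<le> C * nrm 1 (m1 x)) \<and>
     (\<forall>x. m1 x \<in> pos 1 \<longrightarrow> (\<exists>r::real. r \<ge> 0 \<and> f x = of_real r)) \<and>
     (\<forall>x. f (sinv x) = cj (f x)) \<and>
     (\<forall>n>0. K n = {X \<in> pos n. map_mat f X = 1\<^sub>m n})"

definition lemma4p3_conclusion ::
  "('k::real_normed_field \<Rightarrow> 'e::ab_group_add \<Rightarrow> 'e) \<Rightarrow> ('k \<Rightarrow> 'k) \<Rightarrow> ('e \<Rightarrow> 'e)
    \<Rightarrow> (nat \<Rightarrow> 'e mat \<Rightarrow> real) \<Rightarrow> (nat \<Rightarrow> 'e mat set) \<Rightarrow> (nat \<Rightarrow> 'e mat set)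
    \<Rightarrow> ('e \<Rightarrow> 'k) \<Rightarrow> bool" where
  "lemma4p3_conclusion scale cj sinv nrm pos K f \<longleftrightarrow> (\<forall>n>0.
     (\<forall>X \<in> sa_mats sinv n. nrm n X =
        Inf {opnorm (adjm cj a1 * a1 + adjm cj a2 * a2) | a1 a2 X1 X2.
               a1 \<in> carrier_mat n n \<and> a2 \<in> carrier_mat n n \<and> X1 \<in> K n \<and> X2 \<in> K n \<and>
               X = compress scale cj a1 X1 - compress scale cj a2 X2}) \<and>
     (\<forall>X \<in> pos n. nrm n X = opnorm (map_mat f X)) \<and>
     K n = {X \<in> pos n. map_mat f X = 1\<^sub>m n})"

end

theory Submission
  imports Defs "HOL-Analysis.L2_Norm" "Jordan_Normal_Form.Determinant"
begin


lemma sum_lessThan_add_split: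
  "(\<Sum>i<n + m. g i) = (\<Sum>i<n. g i) + (\<Sum>i<m. g (n + i))" for n m :: nat
  by (induct m) (simp_all add: add.assoc)

locale cjk =
  fixes cj :: "'k::real_normed_field \<Rightarrow> 'k"
  assumes cj_add: "cj (a + b) = cj a + cj b"
  and cj_mult: "cj (a * b) = cj a * cj b"
  and cj_cj[simp]: "cj (cj a) = a"
  and cj_of_real[simp]: "cj (of_real r) = of_real r"
  and cj_sq: "cj a * a = of_real ((norm a)^2)"
begin

lemma cj_0[simp]: "cj 0 = 0" using cj_of_real[of 0] by simp
lemma cj_1[simp]: "cj 1 = 1" using cj_of_real[of 1] by simp
lemma cj_minus: "cj (- a) = - cj a"
proof -
  have "cj a + cj (-a) = 0" using cj_add[of a "-a"] by simp
  thus ?thesis by (simp add: eq_neg_iff_add_eq_0 add.commute)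
qed
lemma cj_diff: "cj (a - b) = cj a - cj b"
  using cj_add[of a "-b"] cj_minus[of b] by simp
lemma cj_sum: "cj (sum g A) = sum (\<lambda>i. cj (g i)) A"
  by (induct A rule: infinite_finite_induct) (auto simp: cj_add)
lemma cj_inj[simp]: "cj a = cj b \<longleftrightarrow> a = b"
  by (metis cj_cj)
lemma cj_eq0[simp]: "cj a = 0 \<longleftrightarrow> a = 0"
  by (metis cj_cj cj_0)
lemma norm_cj[simp]: "norm (cj a) = norm a"
proof -
  have "of_real ((norm (cj a))^2) = (of_real ((norm a)^2) :: 'k)"
    using cj_sq[of "cj a"] cj_sq[of a] by (simp add: mult.commute)
  hence "(norm (cj a))^2 = (norm a)^2" by (metis of_real_eq_iff)
  thus ?thesis by (simp add: power2_eq_iff_nonneg)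
qed
lemma cj_sq': "a * cj a = of_real ((norm a)^2)"
  using cj_sq[of a] by (simp add: mult.commute)
lemma cj_inverse: "cj (inverse a) = inverse (cj a)"
proof (cases "a = 0")
  case False
  have "cj a * cj (inverse a) = 1" using cj_mult[of a "inverse a"] False by simp
  from inverse_unique[OF this] show ?thesis by simp
qed simp

definition ip :: "'k vec \<Rightarrow> 'k vec \<Rightarrow> 'k" where
  "ip u v = (\<Sum>i<dim_vec u. cj (u $ i) * v $ i)"

lemma vnorm_L2: "vnorm v = L2_set (\<lambda>i. norm (v $ i)) {..<dim_vec v}"
  by (simp add: vnorm_def L2_set_def)

lemma vnorm_nonneg[simp]: "vnorm v \<ge> 0"
  unfolding vnorm_def by (intro real_sqrt_ge_zero sum_nonneg) simp

lemma vnorm_sq: "(vnorm v)^2 = (\<Sum>i<dim_vec v. (norm (v $ i))^2)"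
proof -
  have "0 \<le> (\<Sum>i<dim_vec v. (norm (v $ i))^2)" by (intro sum_nonneg) simp
  thus ?thesis unfolding vnorm_def by simp
qed

lemma ip_self: "ip v v = of_real ((vnorm v)^2)"
  unfolding ip_def vnorm_sq by (simp add: cj_sq)

lemma cauchy_schwarz: assumes "dim_vec v = dim_vec u"
  shows "norm (ip u v) \<le> vnorm u * vnorm v"
proof -
  have "norm (ip u v) \<le> (\<Sum>i<dim_vec u. norm (cj (u $ i) * v $ i))"
    unfolding ip_def by (rule norm_sum)
  also have "\<dots> = (\<Sum>i<dim_vec u. \<bar>norm (u $ i)\<bar> * \<bar>norm (v $ i)\<bar>)"
    by (simp add: norm_mult)
  also have "\<dots> \<le> L2_set (\<lambda>i. norm (u $ i)) {..<dim_vec u} * L2_set (\<lambda>i. norm (v $ i)) {..<dim_vec u}"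
    by (rule L2_set_mult_ineq)
  finally show ?thesis using assms by (simp add: vnorm_L2)
qed

lemma norm_le_vnorm: "i < dim_vec v \<Longrightarrow> norm (v $ i) \<le> vnorm v"
  unfolding vnorm_L2 by (rule member_le_L2_set) auto

lemma vnorm_le_sum: "vnorm v \<le> (\<Sum>i<dim_vec v. norm (v $ i))"
  unfolding vnorm_L2 by (rule L2_set_le_sum) auto

lemma vnorm_smult: "vnorm (c \<cdot>\<^sub>v v) = norm c * vnorm v"
proof -
  have "(vnorm (c \<cdot>\<^sub>v v))^2 = (norm c * vnorm v)^2"
    unfolding vnorm_sq power_mult_distrib by (simp add: sum_distrib_left norm_mult power_mult_distrib)
  thus ?thesis by (simp add: power2_eq_iff_nonneg)
qed

lemma vnorm_zero_iff: "vnorm v = 0 \<longleftrightarrow> v = 0\<^sub>v (dim_vec v)"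
proof
  assume "vnorm v = 0"
  hence "norm (v $ i) = 0" if "i < dim_vec v" for i
    using norm_le_vnorm[OF that] by (metis norm_ge_zero order_antisym)
  thus "v = 0\<^sub>v (dim_vec v)" by (intro eq_vecI) auto
next
  assume h: "v = 0\<^sub>v (dim_vec v)"
  have "\<forall>i<dim_vec v. v $ i = 0" by (subst h) auto
  then show "vnorm v = 0" by (simp add: vnorm_def)
qed


lemma row_sprod: "dim_vec v = dim_col A \<Longrightarrow> i < dim_row A \<Longrightarrow> row A i \<bullet> v = (\<Sum>j<dim_vec v. A $$ (i,j) * v $ j)"
  by (auto simp: scalar_prod_def atLeast0LessThan intro!: sum.cong)
lemma mult_mat_vec_idx: "i < dim_row A \<Longrightarrow> dim_vec v = dim_col A \<Longrightarrow> (A *\<^sub>v v) $ i = (\<Sum>j<dim_vec v. A $$ (i,j) * v $ j)"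
  by (simp add: row_sprod)

lemma ip_add_right: "dim_vec v = dim_vec u \<Longrightarrow> dim_vec w = dim_vec u \<Longrightarrow> ip u (v + w) = ip u v + ip u w"
  unfolding ip_def by (simp add: distrib_left sum.distrib)
lemma ip_diff_right: "dim_vec v = dim_vec u \<Longrightarrow> dim_vec w = dim_vec u \<Longrightarrow> ip u (v - w) = ip u v - ip u w"
  unfolding ip_def by (simp add: right_diff_distrib sum_subtractf)
lemma ip_add_left: "dim_vec w = dim_vec u \<Longrightarrow> ip (u + w) v = ip u v + ip w v"
  unfolding ip_def by (simp add: cj_add distrib_right sum.distrib)
lemma ip_diff_left: "dim_vec w = dim_vec u \<Longrightarrow> ip (u - w) v = ip u v - ip w v"
  unfolding ip_def by (simp add: cj_diff left_diff_distrib sum_subtractf)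
lemma ip_smult_right: "dim_vec v = dim_vec u \<Longrightarrow> ip u (c \<cdot>\<^sub>v v) = c * ip u v"
  unfolding ip_def by (simp add: sum_distrib_left ac_simps)
lemma ip_smult_left: "ip (c \<cdot>\<^sub>v u) v = cj c * ip u v"
  unfolding ip_def by (simp add: sum_distrib_left ac_simps cj_mult)
lemma ip_swap: "dim_vec v = dim_vec u \<Longrightarrow> ip v u = cj (ip u v)"
  unfolding ip_def by (simp add: cj_sum cj_mult ac_simps)

definition adjm' :: "'k mat \<Rightarrow> 'k mat" where "adjm' = adjm cj"

lemma adjm_dims[simp]: "dim_row (adjm cj A) = dim_col A" "dim_col (adjm cj A) = dim_row A"
  by (simp_all add: adjm_def)
lemma adjm_idx[simp]: "i < dim_col A \<Longrightarrow> j < dim_row A \<Longrightarrow> adjm cj A $$ (i,j) = cj (A $$ (j,i))"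
  by (simp add: adjm_def)
lemma adjm_carrier[simp]: "A \<in> carrier_mat m n \<Longrightarrow> adjm cj A \<in> carrier_mat n m"
  by (intro carrier_matI) auto
lemma adjm_adjm[simp]: "adjm cj (adjm cj A) = A"
  by (intro eq_matI) auto
lemma adjm_mult: "A \<in> carrier_mat m n \<Longrightarrow> B \<in> carrier_mat n p \<Longrightarrow>
   adjm cj (A * B) = adjm cj B * adjm cj A"
  by (intro eq_matI) (auto simp: scalar_prod_def cj_sum cj_mult ac_simps)
lemma adjm_add: "A \<in> carrier_mat m n \<Longrightarrow> B \<in> carrier_mat m n \<Longrightarrow>
   adjm cj (A + B) = adjm cj A + adjm cj B"
  by (intro eq_matI) (auto simp: cj_add)
lemma adjm_diff: "A \<in> carrier_mat m n \<Longrightarrow> B \<in> carrier_mat m n \<Longrightarrow>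
   adjm cj (A - B) = adjm cj A - adjm cj B"
  by (intro eq_matI) (auto simp: cj_diff)
lemma adjm_smult_real: "adjm cj (of_real r \<cdot>\<^sub>m A) = of_real r \<cdot>\<^sub>m adjm cj A"
  by (intro eq_matI) (auto simp: cj_mult)
lemma adjm_one[simp]: "adjm cj (1\<^sub>m n) = 1\<^sub>m n"
  by (intro eq_matI) auto
lemma adjm_zero[simp]: "adjm cj (0\<^sub>m n m) = 0\<^sub>m m n"
  by (intro eq_matI) auto

lemma ip_adj: assumes A: "A \<in> carrier_mat m n" and u: "u \<in> carrier_vec m" and v: "v \<in> carrier_vec n"
  shows "ip u (A *\<^sub>v v) = ip (adjm cj A *\<^sub>v u) v"
proof -
  have "ip u (A *\<^sub>v v) = (\<Sum>i<m. \<Sum>j<n. cj (u $ i) * (A $$ (i,j) * v $ j))"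
    using A u v unfolding ip_def by (simp add: row_sprod sum_distrib_left)
  also have "\<dots> = (\<Sum>j<n. \<Sum>i<m. cj (u $ i) * (A $$ (i,j) * v $ j))" by (rule sum.swap)
  also have "\<dots> = ip (adjm cj A *\<^sub>v u) v"
    using A u v unfolding ip_def by (simp add: row_sprod sum_distrib_right sum_distrib_left cj_sum cj_mult ac_simps)
  finally show ?thesis .
qed

lemma mat_vec_bound: assumes v: "v \<in> carrier_vec (dim_col A)"
  shows "vnorm (A *\<^sub>v v) \<le> (\<Sum>i<dim_row A. \<Sum>j<dim_col A. norm (A $$ (i,j))) * vnorm v"
proof -
  have "vnorm (A *\<^sub>v v) \<le> (\<Sum>i<dim_row A. norm ((A *\<^sub>v v) $ i))"
    using vnorm_le_sum[of "A *\<^sub>v v"] by simp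
  also have "\<dots> \<le> (\<Sum>i<dim_row A. \<Sum>j<dim_col A. norm (A $$ (i,j)) * vnorm v)"
  proof (rule sum_mono)
    fix i assume i: "i \<in> {..<dim_row A}"
    have "norm ((A *\<^sub>v v) $ i) = norm (\<Sum>j<dim_col A. A $$ (i,j) * v $ j)"
      using i v by (simp add: row_sprod)
    also have "\<dots> \<le> (\<Sum>j<dim_col A. norm (A $$ (i,j) * v $ j))" by (rule norm_sum)
    also have "\<dots> \<le> (\<Sum>j<dim_col A. norm (A $$ (i,j)) * vnorm v)"
      by (rule sum_mono) (use v norm_le_vnorm[of _ v] in \<open>auto simp: norm_mult intro: mult_left_mono\<close>)
    finally show "norm ((A *\<^sub>v v) $ i) \<le> (\<Sum>j<dim_col A. norm (A $$ (i,j)) * vnorm v)" .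
  qed
  also have "\<dots> = (\<Sum>i<dim_row A. \<Sum>j<dim_col A. norm (A $$ (i,j))) * vnorm v"
    by (simp add: sum_distrib_right)
  finally show ?thesis .
qed

lemma opn_bdd: "bdd_above {vnorm (A *\<^sub>v v) | v. v \<in> carrier_vec (dim_col A) \<and> vnorm v \<le> 1}"
proof (rule bdd_aboveI)
  fix x assume "x \<in> {vnorm (A *\<^sub>v v) | v. v \<in> carrier_vec (dim_col A) \<and> vnorm v \<le> 1}"
  then obtain v where v: "v \<in> carrier_vec (dim_col A)" "vnorm v \<le> 1" and x: "x = vnorm (A *\<^sub>v v)" by auto
  have M: "0 \<le> (\<Sum>i<dim_row A. \<Sum>j<dim_col A. norm (A $$ (i,j)))" by (intro sum_nonneg) auto
  show "x \<le> (\<Sum>i<dim_row A. \<Sum>j<dim_col A. norm (A $$ (i,j)))"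
    using mat_vec_bound[OF v(1)] mult_left_mono[OF v(2) M] x by simp
qed

lemma opnorm_ge: "v \<in> carrier_vec (dim_col A) \<Longrightarrow> vnorm v \<le> 1 \<Longrightarrow> vnorm (A *\<^sub>v v) \<le> opnorm A"
  unfolding opnorm_def by (rule cSup_upper[OF _ opn_bdd]) auto

lemma vnorm_zero[simp]: "vnorm (0\<^sub>v n) = 0"
  using vnorm_zero_iff[of "0\<^sub>v n"] by simp

lemma opnorm_nonneg: "opnorm A \<ge> 0"
proof -
  have "vnorm (A *\<^sub>v 0\<^sub>v (dim_col A)) \<le> opnorm A" by (rule opnorm_ge) simp_all
  thus ?thesis using vnorm_nonneg order_trans by blast
qed

lemma opnorm_le: fixes A :: "'k mat" assumes v: "v \<in> carrier_vec (dim_col A)"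
  shows "vnorm (A *\<^sub>v v) \<le> opnorm A * vnorm v"
proof (cases "vnorm v = 0")
  case True
  have d: "dim_vec v = dim_col A" using carrier_vecD[OF v] .
  have h: "v = 0\<^sub>v (dim_vec v)" using vnorm_zero_iff[of v] True by blast
  have "A *\<^sub>v v = A *\<^sub>v 0\<^sub>v (dim_col A)" using h d by metis
  also have "\<dots> = 0\<^sub>v (dim_row A)" by (intro eq_vecI) (auto simp: scalar_prod_def)
  finally show ?thesis using True by simp
next
  case False
  hence pos: "vnorm v > 0" using vnorm_nonneg[of v] by linarith
  define c where "c = inverse (vnorm v)"
  have "A *\<^sub>v ((of_real c :: 'k) \<cdot>\<^sub>v v) = (of_real c :: 'k) \<cdot>\<^sub>v (A *\<^sub>v v)"
    by (rule mult_mat_vec[OF carrier_matI[OF refl refl] v])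
  moreover have "vnorm ((of_real c :: 'k) \<cdot>\<^sub>v v) \<le> 1" using pos by (simp add: vnorm_smult c_def norm_inverse)
  ultimately have "vnorm ((of_real c :: 'k) \<cdot>\<^sub>v (A *\<^sub>v v)) \<le> opnorm A"
    using opnorm_ge[of "(of_real c :: 'k) \<cdot>\<^sub>v v" A] v by simp
  hence "c * vnorm (A *\<^sub>v v) \<le> opnorm A" using pos by (simp add: vnorm_smult c_def norm_inverse)
  hence "vnorm (A *\<^sub>v v) / vnorm v \<le> opnorm A" by (simp add: c_def divide_inverse_commute)
  thus ?thesis using pos by (simp add: pos_divide_le_eq)
qed

lemma opnorm_least: fixes A :: "'k mat" assumes c: "c \<ge> 0"
  and h: "\<And>v. v \<in> carrier_vec (dim_col A) \<Longrightarrow> vnorm (A *\<^sub>v v) \<le> c * vnorm v"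
  shows "opnorm A \<le> c"
  unfolding opnorm_def
proof (rule cSup_least)
  show "{vnorm (A *\<^sub>v v) | v. v \<in> carrier_vec (dim_col A) \<and> vnorm v \<le> 1} \<noteq> {}"
  proof -
    have "vnorm (A *\<^sub>v 0\<^sub>v (dim_col A)) \<in> {vnorm (A *\<^sub>v v) | v. v \<in> carrier_vec (dim_col A) \<and> vnorm v \<le> 1}"
      by (intro CollectI exI[of _ "0\<^sub>v (dim_col A)"]) simp
    thus ?thesis by blast
  qed
  fix x assume "x \<in> {vnorm (A *\<^sub>v v) | v. v \<in> carrier_vec (dim_col A) \<and> vnorm v \<le> 1}"
  then obtain v where v: "v \<in> carrier_vec (dim_col A)" "vnorm v \<le> 1" and x: "x = vnorm (A *\<^sub>v v)" by auto
  have "c * vnorm v \<le> c" using mult_left_mono[OF v(2) c] by simp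
  thus "x \<le> c" using h[OF v(1)] x by simp
qed


lemma norm_of_real_sq: "norm (of_real ((x::real)^2) :: 'k) = x^2"
  by (simp add: norm_power)

lemma opnorm_adjm_le: assumes A: "A \<in> carrier_mat m n"
  shows "opnorm (adjm cj A) \<le> opnorm A"
proof (rule opnorm_least[OF opnorm_nonneg])
  fix w :: "'k vec" assume "w \<in> carrier_vec (dim_col (adjm cj A))"
  hence w: "w \<in> carrier_vec m" using A by simp
  define u where "u = adjm cj A *\<^sub>v w"
  have u: "u \<in> carrier_vec n" unfolding u_def by (rule mult_mat_vec_carrier[OF adjm_carrier[OF A] w])
  have "of_real ((vnorm u)^2) = ip u u" by (simp add: ip_self)
  also have "\<dots> = ip w (A *\<^sub>v u)" unfolding u_def using ip_adj[OF A w u] u_def by simp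
  finally have "(vnorm u)^2 = norm (ip w (A *\<^sub>v u))" by (metis norm_of_real_sq)
  also have "\<dots> \<le> vnorm w * vnorm (A *\<^sub>v u)" by (rule cauchy_schwarz) (use A w u in simp)
  also have "\<dots> \<le> vnorm w * (opnorm A * vnorm u)"
    by (rule mult_left_mono[OF opnorm_le]) (use A u in simp_all)
  finally have *: "vnorm u * vnorm u \<le> (opnorm A * vnorm w) * vnorm u" by (simp add: power2_eq_square ac_simps)
  show "vnorm (adjm cj A *\<^sub>v w) \<le> opnorm A * vnorm w"
  proof (cases "vnorm u = 0")
    case True thus ?thesis unfolding u_def using opnorm_nonneg[of A] vnorm_nonneg[of w] by simp
  next
    case False
    hence "vnorm u > 0" using vnorm_nonneg[of u] by linarith
    with * show ?thesis unfolding u_def by (simp add: mult_le_cancel_right)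
  qed
qed

lemma opnorm_sq_le: assumes B: "B \<in> carrier_mat m n"
  shows "(opnorm B)^2 \<le> opnorm (adjm cj B * B)"
proof -
  let ?C = "adjm cj B * B"
  have C: "?C \<in> carrier_mat n n" by (rule mult_carrier_mat[OF adjm_carrier[OF B] B])
  have "opnorm B \<le> sqrt (opnorm ?C)"
  proof (rule opnorm_least)
    show "sqrt (opnorm ?C) \<ge> 0" using opnorm_nonneg by simp
    fix v :: "'k vec" assume "v \<in> carrier_vec (dim_col B)"
    hence v: "v \<in> carrier_vec n" using B by simp
    have Bv: "B *\<^sub>v v \<in> carrier_vec m" using B v by simp
    have "of_real ((vnorm (B *\<^sub>v v))^2) = ip (B *\<^sub>v v) (B *\<^sub>v v)" by (simp add: ip_self)
    also have "\<dots> = ip (adjm cj B *\<^sub>v (B *\<^sub>v v)) v" by (rule ip_adj[OF B Bv v])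
    also have "\<dots> = cj (ip v (?C *\<^sub>v v))"
      using ip_swap[of v "adjm cj B *\<^sub>v (B *\<^sub>v v)"] B v
      by (simp add: assoc_mult_mat_vec[of "adjm cj B" n m B n v])
    finally have "(vnorm (B *\<^sub>v v))^2 = norm (ip v (?C *\<^sub>v v))" by (metis norm_of_real_sq norm_cj)
    also have "\<dots> \<le> vnorm v * vnorm (?C *\<^sub>v v)" by (rule cauchy_schwarz) (use B v in simp)
    also have "\<dots> \<le> vnorm v * (opnorm ?C * vnorm v)"
      by (rule mult_left_mono[OF opnorm_le]) (use B v in simp_all)
    also have "\<dots> = (sqrt (opnorm ?C) * vnorm v)^2"
      using opnorm_nonneg[of ?C] by (simp add: power_mult_distrib power2_eq_square)
    finally show "vnorm (B *\<^sub>v v) \<le> sqrt (opnorm ?C) * vnorm v"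
      using opnorm_nonneg[of ?C] by (simp add: power2_le_iff_abs_le)
  qed
  hence "(opnorm B)^2 \<le> (sqrt (opnorm ?C))^2"
    using opnorm_nonneg[of B] by (simp add: power_mono)
  thus ?thesis using opnorm_nonneg[of ?C] by simp
qed

lemma quad_diff: assumes H: "H \<in> carrier_mat n n" and a: "a \<in> carrier_vec n" and v: "v \<in> carrier_vec n"
  shows "ip (a + v) (H *\<^sub>v (a + v)) - ip (a - v) (H *\<^sub>v (a - v)) = 2 * (ip a (H *\<^sub>v v) + ip v (H *\<^sub>v a))"
proof -
  have e1: "H *\<^sub>v (a + v) = H *\<^sub>v a + H *\<^sub>v v" using H a v by (simp add: mult_add_distrib_mat_vec)
  have e2: "H *\<^sub>v (a - v) = H *\<^sub>v a - H *\<^sub>v v" using H a v by (simp add: mult_minus_distrib_mat_vec)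
  show ?thesis unfolding e1 e2 using H a v
    by (simp add: ip_add_left ip_diff_left ip_add_right ip_diff_right algebra_simps)
qed

lemma parallelogram: assumes a: "a \<in> carrier_vec n" and v: "v \<in> carrier_vec n"
  shows "ip (a + v) (a + v) + ip (a - v) (a - v) = 2 * (ip a a + ip v v)"
  using a v by (simp add: ip_add_left ip_diff_left ip_add_right ip_diff_right algebra_simps)


lemma polar: assumes H: "H \<in> carrier_mat n n" and sa: "adjm cj H = H" and s: "s \<ge> 0"
  and q: "\<And>v. v \<in> carrier_vec n \<Longrightarrow> \<exists>r. ip v (H *\<^sub>v v) = of_real r \<and> \<bar>r\<bar> \<le> s * (vnorm v)^2"
  shows "opnorm H \<le> s"
proof (rule opnorm_least[OF s])
  fix v :: "'k vec" assume "v \<in> carrier_vec (dim_col H)"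
  hence v: "v \<in> carrier_vec n" using H by simp
  define w where "w = H *\<^sub>v v"
  have w: "w \<in> carrier_vec n" unfolding w_def by (rule mult_mat_vec_carrier[OF H v])
  show "vnorm (H *\<^sub>v v) \<le> s * vnorm v"
  proof (cases "vnorm w = 0")
    case True thus ?thesis using s unfolding w_def by simp
  next
    case False
    hence wp: "vnorm w > 0" using vnorm_nonneg[of w] by linarith
    have vp: "vnorm v > 0"
    proof (rule ccontr)
      assume "\<not> vnorm v > 0"
      hence "vnorm v = 0" using vnorm_nonneg[of v] by linarith
      hence h: "v = 0\<^sub>v (dim_vec v)" using vnorm_zero_iff[of v] by blast
      have "w = H *\<^sub>v 0\<^sub>v n" unfolding w_def using h v by (metis carrier_vecD)
      also have "\<dots> = 0\<^sub>v n" using H by (intro eq_vecI) (auto simp: scalar_prod_def)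
      finally have "vnorm w = 0" by simp
      thus False using False by simp
    qed
    define c where "c = vnorm v / vnorm w"
    have cp: "c > 0" using vp wp unfolding c_def by simp
    have cw: "c * vnorm w = vnorm v" using wp unfolding c_def by simp
    define a where "a = (of_real c :: 'k) \<cdot>\<^sub>v w"
    have a: "a \<in> carrier_vec n" unfolding a_def using w by simp
    have e1: "ip a (H *\<^sub>v v) = of_real (c * (vnorm w)^2)"
      unfolding a_def w_def[symmetric] by (simp add: ip_smult_left ip_self)
    have e2: "ip v (H *\<^sub>v a) = of_real (c * (vnorm w)^2)"
    proof -
      have "ip v (H *\<^sub>v a) = ip (adjm cj H *\<^sub>v v) a" by (rule ip_adj[OF H v a])
      also have "\<dots> = ip w a" unfolding sa w_def ..
      also have "\<dots> = of_real (c * (vnorm w)^2)" unfolding a_def using w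
        by (simp add: ip_smult_right ip_self)
      finally show ?thesis .
    qed
    have diff: "ip (a + v) (H *\<^sub>v (a + v)) - ip (a - v) (H *\<^sub>v (a - v)) = of_real (4 * c * (vnorm w)^2)"
      unfolding quad_diff[OF H a v] e1 e2 by simp
    have av1: "a + v \<in> carrier_vec n" using a v by simp
    have av2: "a - v \<in> carrier_vec n" using a v by simp
    obtain r1 where r1: "ip (a + v) (H *\<^sub>v (a + v)) = of_real r1" "\<bar>r1\<bar> \<le> s * (vnorm (a + v))^2"
      using q[OF av1] by blast
    obtain r2 where r2: "ip (a - v) (H *\<^sub>v (a - v)) = of_real r2" "\<bar>r2\<bar> \<le> s * (vnorm (a - v))^2"
      using q[OF av2] by blast
    have "(of_real (r1 - r2) :: 'k) = of_real (4 * c * (vnorm w)^2)" using diff r1(1) r2(1) by simp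
    hence d: "r1 - r2 = 4 * c * (vnorm w)^2" by (metis of_real_eq_iff)
    have "(of_real ((vnorm (a + v))^2 + (vnorm (a - v))^2) :: 'k) = of_real (2 * ((vnorm a)^2 + (vnorm v)^2))"
      using parallelogram[OF a v] by (simp add: ip_self)
    hence p: "(vnorm (a + v))^2 + (vnorm (a - v))^2 = 2 * ((vnorm a)^2 + (vnorm v)^2)" by (metis of_real_eq_iff)
    have an: "vnorm a = vnorm v" unfolding a_def vnorm_smult using cp cw by simp
    have "4 * c * (vnorm w)^2 \<le> s * ((vnorm (a + v))^2 + (vnorm (a - v))^2)"
      using d r1(2) r2(2) by (simp add: algebra_simps)
    also have "\<dots> = s * (4 * (vnorm v)^2)" unfolding p an by simp
    finally have "4 * (c * vnorm w) * vnorm w \<le> 4 * (s * vnorm v) * vnorm v"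
      by (simp add: power2_eq_square ac_simps)
    hence "vnorm v * vnorm w \<le> (s * vnorm v) * vnorm v" unfolding cw by (simp add: ac_simps)
    hence "vnorm v * vnorm w \<le> vnorm v * (s * vnorm v)" by (simp add: ac_simps)
    hence "vnorm w \<le> s * vnorm v" using vp by (simp add: mult_le_cancel_left)
    thus ?thesis unfolding w_def .
  qed
qed


lemma adjm_smult: "adjm cj (c \<cdot>\<^sub>m A) = cj c \<cdot>\<^sub>m adjm cj A"
  by (intro eq_matI) (auto simp: cj_mult)

lemma adjm_four_block: assumes "A \<in> carrier_mat n1 k1" "B \<in> carrier_mat n1 k2" "C \<in> carrier_mat n2 k1" "D \<in> carrier_mat n2 k2"
  shows "adjm cj (four_block_mat A B C D) = four_block_mat (adjm cj A) (adjm cj C) (adjm cj B) (adjm cj D)"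
proof -
  note d = carrier_matD[OF assms(1)] carrier_matD[OF assms(2)] carrier_matD[OF assms(3)] carrier_matD[OF assms(4)]
  show ?thesis by (rule eq_matI) (auto simp: d)
qed

lemma mult_dim1_idx: "A \<in> carrier_mat m 1 \<Longrightarrow> B \<in> carrier_mat 1 p \<Longrightarrow> i < m \<Longrightarrow> j < p \<Longrightarrow>
  (A * B) $$ (i,j) = A $$ (i,0) * B $$ (0,j)"
  by (auto simp: scalar_prod_def)

lemma ip_append: "dim_vec x1 = dim_vec x2 \<Longrightarrow> dim_vec y1 = dim_vec y2 \<Longrightarrow>
  ip (x1 @\<^sub>v y1) (x2 @\<^sub>v y2) = ip x1 x2 + ip y1 y2"
  unfolding ip_def by (simp add: sum_lessThan_add_split)

lemma ip_unit: assumes A: "A \<in> carrier_mat n n" and i: "i < n"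
  shows "ip (unit_vec n i) (A *\<^sub>v unit_vec n i) = A $$ (i,i)"
proof -
  have "(A *\<^sub>v unit_vec n i) $ i = A $$ (i,i)"
    using A i by (simp add: mult_mat_vec_idx if_distrib sum.delta' cong: if_cong)
  moreover have "ip (unit_vec n i) (A *\<^sub>v unit_vec n i) = (A *\<^sub>v unit_vec n i) $ i"
  proof -
    have "ip (unit_vec n i) (A *\<^sub>v unit_vec n i) = (\<Sum>k<n. if k = i then (A *\<^sub>v unit_vec n i) $ k else 0)"
      unfolding ip_def by (rule sum.cong) (auto simp: unit_vec_def)
    also have "\<dots> = (A *\<^sub>v unit_vec n i) $ i" using i by simp
    finally show ?thesis .
  qed
  ultimately show ?thesis by simp
qed


lemma smult_mat_vec: assumes d: "dim_vec v = dim_col A" shows "(k \<cdot>\<^sub>m A) *\<^sub>v v = k \<cdot>\<^sub>v (A *\<^sub>v v)"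
proof (rule eq_vecI)
  fix i assume "i < dim_vec (k \<cdot>\<^sub>v (A *\<^sub>v v))"
  hence i: "i < dim_row A" by simp
  have "((k \<cdot>\<^sub>m A) *\<^sub>v v) $ i = (\<Sum>j<dim_vec v. (k \<cdot>\<^sub>m A) $$ (i,j) * v $ j)"
    by (rule mult_mat_vec_idx) (use d i in auto)
  also have "\<dots> = k * (\<Sum>j<dim_vec v. A $$ (i,j) * v $ j)"
    using d i by (simp add: sum_distrib_left ac_simps)
  also have "\<dots> = (k \<cdot>\<^sub>v (A *\<^sub>v v)) $ i" using d i by (simp add: row_sprod)
  finally show "((k \<cdot>\<^sub>m A) *\<^sub>v v) $ i = (k \<cdot>\<^sub>v (A *\<^sub>v v)) $ i" .
qed simp

lemma factor_exists:
  "P \<in> carrier_mat n n \<Longrightarrow> adjm cj P = P \<Longrightarrow>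
   (\<And>v. v \<in> carrier_vec n \<Longrightarrow> v \<noteq> 0\<^sub>v n \<Longrightarrow> \<exists>r>0. ip v (P *\<^sub>v v) = of_real r) \<Longrightarrow>
   \<exists>b \<in> carrier_mat n n. adjm cj b * P * b = 1\<^sub>m n"
proof (induct n arbitrary: P)
  case 0
  show ?case by (rule bexI[of _ "1\<^sub>m 0"]) (use 0 in \<open>auto intro!: eq_matI\<close>)
next
  case (Suc n P)
  have P: "P \<in> carrier_mat (Suc n) (Suc n)" and sa: "adjm cj P = P" using Suc.prems by auto
  note pd = Suc.prems(3)
  have Pd: "dim_row P = Suc n" "dim_col P = Suc n" using P by auto
  have saE: "P $$ (i,j) = cj (P $$ (j,i))" if "i < Suc n" "j < Suc n" for i j
  proof -
    have "P $$ (i,j) = adjm cj P $$ (i,j)" using sa by simp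
    also have "\<dots> = cj (P $$ (j,i))" using that Pd by simp
    finally show ?thesis .
  qed
  define \<sigma> where "\<sigma> = P $$ (0,0)"
  obtain r where r: "r > 0" "\<sigma> = of_real r"
  proof -
    have "unit_vec (Suc n) 0 \<noteq> 0\<^sub>v (Suc n)"
      by (metis index_unit_vec(1) index_zero_vec(1) zero_less_Suc zero_neq_one)
    from pd[OF unit_vec_carrier this] obtain r where "r > 0" "ip (unit_vec (Suc n) 0) (P *\<^sub>v unit_vec (Suc n) 0) = of_real r"
      by blast
    with ip_unit[OF P, of 0] that show ?thesis unfolding \<sigma>_def by auto
  qed
  have \<sigma>0: "\<sigma> \<noteq> 0" using r by simp
  have cj\<sigma>: "cj \<sigma> = \<sigma>" using r by simp
  define B where "B = mat 1 n (\<lambda>(i,j). P $$ (0, Suc j))"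
  define D where "D = mat n n (\<lambda>(i,j). P $$ (Suc i, Suc j))"
  have B: "B \<in> carrier_mat 1 n" and D: "D \<in> carrier_mat n n" unfolding B_def D_def by auto
  have I1: "\<sigma> \<cdot>\<^sub>m 1\<^sub>m 1 \<in> carrier_mat 1 1" by simp
  have Pblk: "P = four_block_mat (\<sigma> \<cdot>\<^sub>m 1\<^sub>m 1) B (adjm cj B) D"
  proof (rule eq_matI)
    fix i j assume ij: "i < dim_row (four_block_mat (\<sigma> \<cdot>\<^sub>m 1\<^sub>m 1) B (adjm cj B) D)"
      "j < dim_col (four_block_mat (\<sigma> \<cdot>\<^sub>m 1\<^sub>m 1) B (adjm cj B) D)"
    hence i: "i < Suc n" and j: "j < Suc n" using B D by auto
    show "P $$ (i,j) = four_block_mat (\<sigma> \<cdot>\<^sub>m 1\<^sub>m 1) B (adjm cj B) D $$ (i,j)"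
    proof (cases i)
      case 0
      then show ?thesis using j B D by (cases j) (auto simp: \<sigma>_def B_def)
    next
      case (Suc i')
      then show ?thesis using i j B D saE[of i 0]
        by (cases j) (auto simp: B_def D_def)
    qed
  qed (use B D Pd in auto)
  have Dsa: "adjm cj D = D"
  proof (rule eq_matI)
    fix i j assume ij: "i < dim_row D" "j < dim_col D"
    hence "i < n" "j < n" using D by auto
    hence "adjm cj D $$ (i,j) = cj (P $$ (Suc j, Suc i))" using D by (simp add: D_def)
    also have "\<dots> = P $$ (Suc i, Suc j)" by (rule sym, rule saE) (use \<open>i < n\<close> \<open>j < n\<close> in auto)
    also have "\<dots> = D $$ (i,j)" using \<open>i < n\<close> \<open>j < n\<close> by (simp add: D_def)
    finally show "adjm cj D $$ (i,j) = D $$ (i,j)" .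
  qed (use D in auto)
  have cjs1: "cj (1/\<sigma>) = 1/\<sigma>" using cj\<sigma> by (simp add: divide_inverse cj_inverse)
  define S where "S = D - (1/\<sigma>) \<cdot>\<^sub>m (adjm cj B * B)"
  have BB: "adjm cj B * B \<in> carrier_mat n n" using B by (metis adjm_carrier mult_carrier_mat)
  have S: "S \<in> carrier_mat n n" unfolding S_def by (rule minus_carrier_mat[OF smult_carrier_mat[OF BB]])
  have Ssa: "adjm cj S = S"
    unfolding S_def using D BB
    by (simp add: adjm_diff[OF D] adjm_smult cjs1 adjm_mult[OF adjm_carrier[OF B] B] Dsa)
  have Spd: "\<exists>r>0. ip w (S *\<^sub>v w) = of_real r" if w: "w \<in> carrier_vec n" "w \<noteq> 0\<^sub>v n" for w
  proof -
    define \<beta> where "\<beta> = (B *\<^sub>v w) $ 0"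
    define a where "a = vec 1 (\<lambda>_. - (\<beta> / \<sigma>))"
    have a: "a \<in> carrier_vec 1" unfolding a_def by simp
    define v where "v = a @\<^sub>v w"
    have v: "v \<in> carrier_vec (Suc n)" unfolding v_def using a w by (metis append_carrier_vec plus_1_eq_Suc)
    have vne: "v \<noteq> 0\<^sub>v (Suc n)"
    proof
      assume h: "v = 0\<^sub>v (Suc n)"
      have "w $ i = 0" if "i < n" for i
      proof -
        have "w $ i = v $ Suc i" using a w that unfolding v_def by simp
        also have "\<dots> = 0" using h that by simp
        finally show ?thesis .
      qed
      hence "w = 0\<^sub>v n" using w by (intro eq_vecI) auto
      thus False using w by simp
    qed
    have Pv: "P *\<^sub>v v = ((\<sigma> \<cdot>\<^sub>m 1\<^sub>m 1) *\<^sub>v a + B *\<^sub>v w) @\<^sub>v (adjm cj B *\<^sub>v a + D *\<^sub>v w)"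
      unfolding v_def by (subst Pblk, rule four_block_mat_mult_vec[OF I1 B adjm_carrier[OF B] D a w(1)])
    have e1: "ip a ((\<sigma> \<cdot>\<^sub>m 1\<^sub>m 1) *\<^sub>v a + B *\<^sub>v w) = 0"
      unfolding ip_def using a B w \<sigma>0 by (simp add: a_def \<beta>_def[symmetric] scalar_prod_def)
    have e2: "ip w (adjm cj B *\<^sub>v a) = cj \<beta> * (- (\<beta> / \<sigma>))"
    proof -
      have "ip w (adjm cj B *\<^sub>v a) = ip (adjm cj (adjm cj B) *\<^sub>v w) a"
        by (rule ip_adj[OF adjm_carrier[OF B] w(1) a])
      also have "\<dots> = cj \<beta> * (- (\<beta> / \<sigma>))" unfolding ip_def using B w by (simp add: a_def \<beta>_def)
      finally show ?thesis .
    qed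
    have e3: "ip w (S *\<^sub>v w) = ip w (D *\<^sub>v w) - (1/\<sigma>) * (cj \<beta> * \<beta>)"
    proof -
      have "S *\<^sub>v w = D *\<^sub>v w - (1/\<sigma>) \<cdot>\<^sub>v (adjm cj B *\<^sub>v (B *\<^sub>v w))"
        unfolding S_def using D BB B w
        by (simp add: minus_mult_distrib_mat_vec[OF D _ w(1)] smult_mat_vec assoc_mult_mat_vec[OF adjm_carrier[OF B] B w(1)])
      hence "ip w (S *\<^sub>v w) = ip w (D *\<^sub>v w) - (1/\<sigma>) * ip w (adjm cj B *\<^sub>v (B *\<^sub>v w))"
        using D B w by (simp add: ip_diff_right ip_smult_right)
      also have "ip w (adjm cj B *\<^sub>v (B *\<^sub>v w)) = ip (B *\<^sub>v w) (B *\<^sub>v w)"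
        using ip_adj[OF adjm_carrier[OF B] w(1), of "B *\<^sub>v w"] B w by simp
      also have "\<dots> = cj \<beta> * \<beta>" unfolding ip_def using B by (simp add: \<beta>_def)
      finally show ?thesis .
    qed
    have "ip v (P *\<^sub>v v) = ip a ((\<sigma> \<cdot>\<^sub>m 1\<^sub>m 1) *\<^sub>v a + B *\<^sub>v w) + ip w (adjm cj B *\<^sub>v a + D *\<^sub>v w)"
      unfolding Pv unfolding v_def by (rule ip_append) (use a B D w in simp_all)
    also have "\<dots> = ip w (adjm cj B *\<^sub>v a) + ip w (D *\<^sub>v w)"
      unfolding e1 using a B D w by (simp add: ip_add_right)
    also have "\<dots> = ip w (S *\<^sub>v w)" unfolding e2 e3 using \<sigma>0 by (simp add: field_simps)
    finally have "ip v (P *\<^sub>v v) = ip w (S *\<^sub>v w)" .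
    with pd[OF v vne] show ?thesis by simp
  qed
  obtain c where c: "c \<in> carrier_mat n n" "adjm cj c * S * c = 1\<^sub>m n"
    using Suc.hyps[OF S Ssa Spd] by blast
  define t where "t = (of_real (1 / sqrt r) :: 'k)"
  have cjt: "cj t = t" unfolding t_def by (rule cj_of_real)
  have tt: "t * \<sigma> * t = 1" unfolding t_def r(2) using r(1)
    by (simp flip: of_real_mult)
  define b where "b = four_block_mat (t \<cdot>\<^sub>m 1\<^sub>m 1) ((- (1/\<sigma>)) \<cdot>\<^sub>m (B * c)) (0\<^sub>m n 1) c"
  have Bc: "B * c \<in> carrier_mat 1 n" using B c by simp
  have b: "b \<in> carrier_mat (Suc n) (Suc n)" unfolding b_def
    using four_block_carrier_mat[OF smult_carrier_mat[OF one_carrier_mat[of 1]] c(1), of t "(- (1/\<sigma>)) \<cdot>\<^sub>m (B * c)" "0\<^sub>m n 1"]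
    by simp
  have cjs: "cj (- (1/\<sigma>)) = - (1/\<sigma>)" using cj\<sigma> by (simp add: cj_minus divide_inverse cj_inverse)
  have bad: "adjm cj b = four_block_mat (t \<cdot>\<^sub>m 1\<^sub>m 1) (0\<^sub>m 1 n) ((- (1/\<sigma>)) \<cdot>\<^sub>m (adjm cj c * adjm cj B)) (adjm cj c)"
    unfolding b_def
    by (subst adjm_four_block[of _ 1 1 _ n _ n]) (use Bc c B in \<open>simp_all add: adjm_smult cjs cjt adjm_mult[OF B c(1)]\<close>)
  have adc: "adjm cj c \<in> carrier_mat n n" using c(1) by (rule adjm_carrier)
  have adB: "adjm cj B \<in> carrier_mat n 1" using B by (rule adjm_carrier)
  have cB: "adjm cj c * adjm cj B \<in> carrier_mat n 1" by (rule mult_carrier_mat[OF adc adB])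
  have cS: "adjm cj c * S \<in> carrier_mat n n" by (rule mult_carrier_mat[OF adc S])
  note dims = carrier_matD[OF B] carrier_matD[OF D] carrier_matD[OF c(1)] carrier_matD[OF S] carrier_matD[OF cB] carrier_matD[OF Bc] carrier_matD[OF cS] carrier_matD[OF adc] carrier_matD[OF adB]
  have Q: "adjm cj b * P = four_block_mat ((t * \<sigma>) \<cdot>\<^sub>m 1\<^sub>m 1) (t \<cdot>\<^sub>m B) (0\<^sub>m n 1) (adjm cj c * S)"
  proof -
    have "adjm cj b * P = four_block_mat
       ((t \<cdot>\<^sub>m 1\<^sub>m 1) * (\<sigma> \<cdot>\<^sub>m 1\<^sub>m 1) + 0\<^sub>m 1 n * adjm cj B)
       ((t \<cdot>\<^sub>m 1\<^sub>m 1) * B + 0\<^sub>m 1 n * D)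
       (((- (1/\<sigma>)) \<cdot>\<^sub>m (adjm cj c * adjm cj B)) * (\<sigma> \<cdot>\<^sub>m 1\<^sub>m 1) + adjm cj c * adjm cj B)
       (((- (1/\<sigma>)) \<cdot>\<^sub>m (adjm cj c * adjm cj B)) * B + adjm cj c * D)"
      unfolding bad by (subst Pblk, rule mult_four_block_mat) (use B D c cB adc adB in auto)
    also have "((t \<cdot>\<^sub>m 1\<^sub>m 1) * (\<sigma> \<cdot>\<^sub>m 1\<^sub>m 1) + 0\<^sub>m 1 n * adjm cj B) = (t * \<sigma>) \<cdot>\<^sub>m 1\<^sub>m 1"
      using dims by (intro eq_matI) (auto simp: scalar_prod_def)
    also have "(t \<cdot>\<^sub>m 1\<^sub>m 1) * B + 0\<^sub>m 1 n * D = t \<cdot>\<^sub>m B"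
      using dims by (intro eq_matI) (auto simp: scalar_prod_def)
    also have "((- (1/\<sigma>)) \<cdot>\<^sub>m (adjm cj c * adjm cj B)) * (\<sigma> \<cdot>\<^sub>m 1\<^sub>m 1) + adjm cj c * adjm cj B = 0\<^sub>m n 1"
    proof (rule eq_matI)
      fix i j assume "i < dim_row (0\<^sub>m n 1 :: 'k mat)" "j < dim_col (0\<^sub>m n 1 :: 'k mat)"
      hence ij: "i < n" "j = 0" by auto
      have "(((- (1/\<sigma>)) \<cdot>\<^sub>m (adjm cj c * adjm cj B)) * (\<sigma> \<cdot>\<^sub>m 1\<^sub>m 1)) $$ (i,0)
         = ((- (1/\<sigma>)) \<cdot>\<^sub>m (adjm cj c * adjm cj B)) $$ (i,0) * \<sigma>"
        using mult_dim1_idx[of "(- (1/\<sigma>)) \<cdot>\<^sub>m (adjm cj c * adjm cj B)" n "\<sigma> \<cdot>\<^sub>m 1\<^sub>m 1" 1 i 0] cB ij by simp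
      also have "\<dots> = - ((adjm cj c * adjm cj B) $$ (i,0))" using carrier_matD[OF cB] ij \<sigma>0 by simp
      finally show "(((- (1/\<sigma>)) \<cdot>\<^sub>m (adjm cj c * adjm cj B)) * (\<sigma> \<cdot>\<^sub>m 1\<^sub>m 1) + adjm cj c * adjm cj B) $$ (i,j) = 0\<^sub>m n 1 $$ (i,j)"
        using dims ij by simp
    qed (use cB in auto)
    also have "((- (1/\<sigma>)) \<cdot>\<^sub>m (adjm cj c * adjm cj B)) * B + adjm cj c * D = adjm cj c * S"
    proof -
      have "((- (1/\<sigma>)) \<cdot>\<^sub>m (adjm cj c * adjm cj B)) * B = (- (1/\<sigma>)) \<cdot>\<^sub>m (adjm cj c * (adjm cj B * B))"
        using B c by (simp add: mult_smult_assoc_mat[OF cB B] assoc_mult_mat[OF adjm_carrier[OF c(1)] adjm_carrier[OF B] B])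
      moreover have "adjm cj c * S = adjm cj c * D - (1/\<sigma>) \<cdot>\<^sub>m (adjm cj c * (adjm cj B * B))"
        unfolding S_def using c D BB by (simp add: mult_minus_distrib_mat[OF adjm_carrier[OF c(1)] D] mult_smult_distrib[OF adjm_carrier[OF c(1)] BB])
      moreover have "adjm cj c * (adjm cj B * B) \<in> carrier_mat n n" by (rule mult_carrier_mat[OF adc BB])
      moreover have "adjm cj c * D \<in> carrier_mat n n" by (rule mult_carrier_mat[OF adc D])
      ultimately show ?thesis using dims by (intro eq_matI) auto
    qed
    finally show ?thesis .
  qed
  have "adjm cj b * P * b = four_block_mat ((t * \<sigma>) \<cdot>\<^sub>m 1\<^sub>m 1) (t \<cdot>\<^sub>m B) (0\<^sub>m n 1) (adjm cj c * S) * b"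
    unfolding Q ..
  also have "\<dots> = four_block_mat
     (((t * \<sigma>) \<cdot>\<^sub>m 1\<^sub>m 1) * (t \<cdot>\<^sub>m 1\<^sub>m 1) + (t \<cdot>\<^sub>m B) * 0\<^sub>m n 1)
     (((t * \<sigma>) \<cdot>\<^sub>m 1\<^sub>m 1) * ((- (1/\<sigma>)) \<cdot>\<^sub>m (B * c)) + (t \<cdot>\<^sub>m B) * c)
     (0\<^sub>m n 1 * (t \<cdot>\<^sub>m 1\<^sub>m 1) + (adjm cj c * S) * 0\<^sub>m n 1)
     (0\<^sub>m n 1 * ((- (1/\<sigma>)) \<cdot>\<^sub>m (B * c)) + (adjm cj c * S) * c)"
    unfolding b_def
    by (rule mult_four_block_mat[OF smult_carrier_mat[OF one_carrier_mat] smult_carrier_mat[OF B] zero_carrier_mat cS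
          smult_carrier_mat[OF one_carrier_mat] smult_carrier_mat[OF Bc] zero_carrier_mat c(1)])
  also have "(((t * \<sigma>) \<cdot>\<^sub>m 1\<^sub>m 1) * (t \<cdot>\<^sub>m 1\<^sub>m 1) + (t \<cdot>\<^sub>m B) * 0\<^sub>m n 1) = 1\<^sub>m 1"
    using dims tt by (intro eq_matI) (auto simp: scalar_prod_def ac_simps)
  also have "(((t * \<sigma>) \<cdot>\<^sub>m 1\<^sub>m 1) * ((- (1/\<sigma>)) \<cdot>\<^sub>m (B * c)) + (t \<cdot>\<^sub>m B) * c) = 0\<^sub>m 1 n"
  proof (rule eq_matI)
    fix i j assume "i < dim_row (0\<^sub>m 1 n :: 'k mat)" "j < dim_col (0\<^sub>m 1 n :: 'k mat)"
    hence ij: "i = 0" "j < n" by auto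
    have m1: "((t * \<sigma>) \<cdot>\<^sub>m 1\<^sub>m 1) * ((- (1/\<sigma>)) \<cdot>\<^sub>m (B * c)) = (t * \<sigma>) \<cdot>\<^sub>m ((- (1/\<sigma>)) \<cdot>\<^sub>m (B * c))"
      using mult_smult_assoc_mat[OF one_carrier_mat smult_carrier_mat[OF Bc], of "t * \<sigma>" "- (1/\<sigma>)"]
        left_mult_one_mat[OF smult_carrier_mat[OF Bc], of "- (1/\<sigma>)"] by simp
    have "(((t * \<sigma>) \<cdot>\<^sub>m 1\<^sub>m 1) * ((- (1/\<sigma>)) \<cdot>\<^sub>m (B * c))) $$ (0,j) = (t * \<sigma>) * ((- (1/\<sigma>)) * (B * c) $$ (0,j))"
      unfolding m1 using dims ij by simp
    also have "\<dots> = - (t * (B * c) $$ (0,j))" using \<sigma>0 by (simp add: field_simps)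
    finally have 1: "(((t * \<sigma>) \<cdot>\<^sub>m 1\<^sub>m 1) * ((- (1/\<sigma>)) \<cdot>\<^sub>m (B * c))) $$ (0,j) = - (t * (B * c) $$ (0,j))" .
    have 2: "((t \<cdot>\<^sub>m B) * c) $$ (0,j) = t * (B * c) $$ (0,j)"
      using mult_smult_assoc_mat[OF B c(1), of t] dims ij by simp
    show "(((t * \<sigma>) \<cdot>\<^sub>m 1\<^sub>m 1) * ((- (1/\<sigma>)) \<cdot>\<^sub>m (B * c)) + (t \<cdot>\<^sub>m B) * c) $$ (i,j) = 0\<^sub>m 1 n $$ (i,j)"
      using 1 2 ij dims by simp
  qed (use B c in auto)
  also have "0\<^sub>m n 1 * (t \<cdot>\<^sub>m 1\<^sub>m 1) + (adjm cj c * S) * 0\<^sub>m n 1 = 0\<^sub>m n 1"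
    using dims by (intro eq_matI) (auto simp: scalar_prod_def)
  also have "0\<^sub>m n 1 * ((- (1/\<sigma>)) \<cdot>\<^sub>m (B * c)) + (adjm cj c * S) * c = 1\<^sub>m n"
    using dims c by simp
  also have "four_block_mat (1\<^sub>m 1) (0\<^sub>m 1 n) (0\<^sub>m n 1) (1\<^sub>m n) = (1\<^sub>m (Suc n) :: 'k mat)"
    using four_block_one_mat[of 1 n] by simp
  finally show ?case using b by blast
qed

end



locale ncb = cjk cj for cj :: "'k::real_normed_field \<Rightarrow> 'k" +
  fixes scale :: "'k \<Rightarrow> 'e::ab_group_add \<Rightarrow> 'e"
    and sinv :: "'e \<Rightarrow> 'e" and nrm :: "nat \<Rightarrow> 'e mat \<Rightarrow> real"
    and pos :: "nat \<Rightarrow> 'e mat set" and K :: "nat \<Rightarrow> 'e mat set" and f :: "'e \<Rightarrow> 'k"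
  assumes nc: "nc_base_norm_space scale cj sinv nrm pos K f"

lemma (in ncb) vs: "vector_space scale"
  using nc[unfolded nc_base_norm_space_def, THEN conjunct1] unfolding star_vector_space_def by (rule conjunct1)

sublocale ncb \<subseteq> V: vector_space scale by (rule vs)

context ncb
begin

lemma svs: "star_vector_space scale cj sinv" by (rule nc[unfolded nc_base_norm_space_def, THEN conjunct1])
lemma sinv_sinv[simp]: "sinv (sinv x) = x"
  using svs unfolding star_vector_space_def by blast
lemma sinv_add: "sinv (x + y) = sinv x + sinv y"
  using svs unfolding star_vector_space_def by blast
lemma sinv_scale: "sinv (scale c x) = scale (cj c) (sinv x)"
  using svs unfolding star_vector_space_def by blast

lemma sinv_0[simp]: "sinv 0 = 0"
  using sinv_add[of 0 0] by simp

lemma mo: "matrix_ordered scale cj sinv pos" by (rule nc[unfolded nc_base_norm_space_def, THEN conjunct2, THEN conjunct1])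
lemma os: "operator_space scale nrm" by (rule nc[unfolded nc_base_norm_space_def, THEN conjunct2, THEN conjunct2, THEN conjunct1])
lemma mcvx: "matrix_convex scale cj K" by (rule nc[unfolded nc_base_norm_space_def, THEN conjunct2, THEN conjunct2, THEN conjunct2, THEN conjunct2, THEN conjunct2, THEN conjunct1])
lemma c7: "\<forall>n>0. K n \<subseteq> pos n \<and> (\<forall>X \<in> K n. nrm n X \<le> 1)" by (rule nc[unfolded nc_base_norm_space_def, THEN conjunct2, THEN conjunct2, THEN conjunct2, THEN conjunct2, THEN conjunct2, THEN conjunct2, THEN conjunct1])
lemma c9: "\<forall>t::real. t > 1 \<longrightarrow> (\<forall>n>0. \<forall>X \<in> sa_mats sinv n. nrm n X \<le> 1 \<longrightarrow>
        (\<exists>c1 c2 X1 X2. psd_mat cj n c1 \<and> psd_mat cj n c2 \<and>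
           psd_mat cj n (of_real t \<cdot>\<^sub>m 1\<^sub>m n - (c1 * c1 + c2 * c2)) \<and>
           X1 \<in> K n \<and> X2 \<in> K n \<and>
           X = bimul scale c1 X1 c1 - bimul scale c2 X2 c2))" by (rule nc[unfolded nc_base_norm_space_def, THEN conjunct2, THEN conjunct2, THEN conjunct2, THEN conjunct2, THEN conjunct2, THEN conjunct2, THEN conjunct2, THEN conjunct2, THEN conjunct1])
lemma f_add: "f (x + y) = f x + f y" using nc[unfolded nc_base_norm_space_def, THEN conjunct2, THEN conjunct2, THEN conjunct2, THEN conjunct2, THEN conjunct2, THEN conjunct2, THEN conjunct2, THEN conjunct2, THEN conjunct2, THEN conjunct1] by blast
lemma f_scale: "f (scale c x) = c * f x" using nc[unfolded nc_base_norm_space_def, THEN conjunct2, THEN conjunct2, THEN conjunct2, THEN conjunct2, THEN conjunct2, THEN conjunct2, THEN conjunct2, THEN conjunct2, THEN conjunct2, THEN conjunct2, THEN conjunct1] by blast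
lemma f_pos: "m1 x \<in> pos 1 \<Longrightarrow> \<exists>r::real. r \<ge> 0 \<and> f x = of_real r" using nc[unfolded nc_base_norm_space_def, THEN conjunct2, THEN conjunct2, THEN conjunct2, THEN conjunct2, THEN conjunct2, THEN conjunct2, THEN conjunct2, THEN conjunct2, THEN conjunct2, THEN conjunct2, THEN conjunct2, THEN conjunct2, THEN conjunct1] by blast
lemma f_sinv: "f (sinv x) = cj (f x)" using nc[unfolded nc_base_norm_space_def, THEN conjunct2, THEN conjunct2, THEN conjunct2, THEN conjunct2, THEN conjunct2, THEN conjunct2, THEN conjunct2, THEN conjunct2, THEN conjunct2, THEN conjunct2, THEN conjunct2, THEN conjunct2, THEN conjunct2, THEN conjunct1] by blast
lemma K_def: "n > 0 \<Longrightarrow> K n = {X \<in> pos n. map_mat f X = 1\<^sub>m n}" using nc[unfolded nc_base_norm_space_def, THEN conjunct2, THEN conjunct2, THEN conjunct2, THEN conjunct2, THEN conjunct2, THEN conjunct2, THEN conjunct2, THEN conjunct2, THEN conjunct2, THEN conjunct2, THEN conjunct2, THEN conjunct2, THEN conjunct2, THEN conjunct2] by blast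

lemma K_pos: "n > 0 \<Longrightarrow> K n \<subseteq> pos n" using c7 by blast
lemma K_nrm: "n > 0 \<Longrightarrow> X \<in> K n \<Longrightarrow> nrm n X \<le> 1" using c7 by blast

lemma iii: "t > 1 \<Longrightarrow> n > 0 \<Longrightarrow> X \<in> sa_mats sinv n \<Longrightarrow> nrm n X \<le> 1 \<Longrightarrow>
        (\<exists>c1 c2 X1 X2. psd_mat cj n c1 \<and> psd_mat cj n c2 \<and>
           psd_mat cj n (of_real t \<cdot>\<^sub>m 1\<^sub>m n - (c1 * c1 + c2 * c2)) \<and>
           X1 \<in> K n \<and> X2 \<in> K n \<and>
           X = bimul scale c1 X1 c1 - bimul scale c2 X2 c2)"
  using c9 by blast

lemma f_0[simp]: "f 0 = 0" using f_add[of 0 0] by simp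
lemma f_sum: "f (sum g A) = (\<Sum>a\<in>A. f (g a))"
  by (induct A rule: infinite_finite_induct) (auto simp: f_add)
lemma f_minus: "f (- x) = - f x"
  using f_add[of x "-x"] by (simp add: eq_neg_iff_add_eq_0 add.commute)
lemma f_diff: "f (x - y) = f x - f y"
  using f_add[of x "-y"] f_minus[of y] by simp

lemma mn: "matrix_normed scale nrm" using os unfolding operator_space_def by (rule conjunct1)
lemma nrm_nonneg: "n > 0 \<Longrightarrow> X \<in> carrier_mat n n \<Longrightarrow> nrm n X \<ge> 0"
  using mn unfolding matrix_normed_def by blast
lemma nrm_zero_iff: "n > 0 \<Longrightarrow> X \<in> carrier_mat n n \<Longrightarrow> nrm n X = 0 \<longleftrightarrow> X = 0\<^sub>m n n"
  using mn unfolding matrix_normed_def by blast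
lemma nrm_triangle: "n > 0 \<Longrightarrow> X \<in> carrier_mat n n \<Longrightarrow> Y \<in> carrier_mat n n \<Longrightarrow> nrm n (X + Y) \<le> nrm n X + nrm n Y"
  using mn unfolding matrix_normed_def by blast
lemma nrm_smult: "n > 0 \<Longrightarrow> X \<in> carrier_mat n n \<Longrightarrow> nrm n (msmul scale c X) = norm c * nrm n X"
  using mn unfolding matrix_normed_def by blast

lemma ruan: "n > 0 \<Longrightarrow> m > 0 \<Longrightarrow> A \<in> carrier_mat m n \<Longrightarrow> X \<in> carrier_mat n n \<Longrightarrow> B \<in> carrier_mat n m \<Longrightarrow>
        nrm m (bimul scale A X B) \<le> opnorm A * nrm n X * opnorm B"
  using os[unfolded operator_space_def, THEN conjunct2, THEN conjunct1] by blast
lemma nrm_dsum: "n > 0 \<Longrightarrow> m > 0 \<Longrightarrow> X \<in> carrier_mat n n \<Longrightarrow> Y \<in> carrier_mat m m \<Longrightarrow>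
        nrm (n + m) (dsum X Y) = max (nrm n X) (nrm m Y)"
  using os[unfolded operator_space_def, THEN conjunct2, THEN conjunct2] by blast

lemma mo1: "\<forall>n>0. pos n \<subseteq> sa_mats sinv n \<and>
        (\<forall>X \<in> pos n. \<forall>Y \<in> pos n. X + Y \<in> pos n) \<and>
        (\<forall>X \<in> pos n. \<forall>r::real. r \<ge> 0 \<longrightarrow> msmul scale (of_real r) X \<in> pos n) \<and>
        (\<forall>X \<in> pos n. - X \<in> pos n \<longrightarrow> X = 0\<^sub>m n n)"
  using mo[unfolded matrix_ordered_def] by (rule conjunct1)
lemma mo2: "\<forall>n>0. \<forall>m>0. \<forall>A \<in> carrier_mat n m. \<forall>X \<in> pos n. compress scale cj A X \<in> pos m"
  using mo[unfolded matrix_ordered_def] by (rule conjunct2)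
lemma pos_sa: "n > 0 \<Longrightarrow> pos n \<subseteq> sa_mats sinv n"
  using mo1 by blast
lemma pos_add: "n > 0 \<Longrightarrow> X \<in> pos n \<Longrightarrow> Y \<in> pos n \<Longrightarrow> X + Y \<in> pos n"
  using mo1 by blast
lemma pos_smult: "n > 0 \<Longrightarrow> X \<in> pos n \<Longrightarrow> r \<ge> 0 \<Longrightarrow> msmul scale (of_real r) X \<in> pos n"
  using mo1 by blast
lemma pos_compress: "n > 0 \<Longrightarrow> m > 0 \<Longrightarrow> A \<in> carrier_mat n m \<Longrightarrow> X \<in> pos n \<Longrightarrow> compress scale cj A X \<in> pos m"
  using mo2 by blast

lemma pos_carrier: "n > 0 \<Longrightarrow> X \<in> pos n \<Longrightarrow> X \<in> carrier_mat n n"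
  using pos_sa unfolding sa_mats_def by blast

lemma K_carrier: "n > 0 \<Longrightarrow> X \<in> K n \<Longrightarrow> X \<in> carrier_mat n n"
  using K_pos pos_carrier by blast

lemma bimul_dims[simp]: "dim_row (bimul scale A X B) = dim_row A" "dim_col (bimul scale A X B) = dim_col B"
  by (simp_all add: bimul_def rmul_def lmul_def)

lemma bimul_carrier: "A \<in> carrier_mat m p \<Longrightarrow> B \<in> carrier_mat q r \<Longrightarrow> bimul scale A X B \<in> carrier_mat m r"
  by (intro carrier_matI) auto

lemma bimul_idx: assumes A: "A \<in> carrier_mat m p" and X: "X \<in> carrier_mat p q" and B: "B \<in> carrier_mat q r"
  and i: "i < m" and j: "j < r"
  shows "bimul scale A X B $$ (i,j) = (\<Sum>a<p. \<Sum>b<q. scale (A $$ (i,a) * B $$ (b,j)) (X $$ (a,b)))"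
proof -
  have "bimul scale A X B $$ (i,j) = (\<Sum>b<q. scale (B $$ (b,j)) (\<Sum>a<p. scale (A $$ (i,a)) (X $$ (a,b))))"
    using A X B i j by (simp add: bimul_def rmul_def lmul_def)
  also have "\<dots> = (\<Sum>b<q. \<Sum>a<p. scale (A $$ (i,a) * B $$ (b,j)) (X $$ (a,b)))"
    by (simp add: V.scale_sum_right mult.commute)
  also have "\<dots> = (\<Sum>a<p. \<Sum>b<q. scale (A $$ (i,a) * B $$ (b,j)) (X $$ (a,b)))"
    by (rule sum.swap)
  finally show ?thesis .
qed


lemma mult_idx: "A \<in> carrier_mat m p \<Longrightarrow> C \<in> carrier_mat p q \<Longrightarrow> i < m \<Longrightarrow> c < q \<Longrightarrow>
  (A * C) $$ (i,c) = (\<Sum>a<p. A $$ (i,a) * C $$ (a,c))"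
  by (simp add: scalar_prod_def atLeast0LessThan)
lemma row_col: "A \<in> carrier_mat m p \<Longrightarrow> C \<in> carrier_mat p q \<Longrightarrow> i < m \<Longrightarrow> c < q \<Longrightarrow>
  row A i \<bullet> col C c = (\<Sum>a<p. A $$ (i,a) * C $$ (a,c))"
  using mult_idx[of A m p C q i c] by simp

lemma lmul_dims[simp]: "dim_row (lmul scale A X) = dim_row A" "dim_col (lmul scale A X) = dim_col X"
  by (simp_all add: lmul_def)
lemma rmul_dims[simp]: "dim_row (rmul scale X B) = dim_row X" "dim_col (rmul scale X B) = dim_col B"
  by (simp_all add: rmul_def)

lemma lmul_idx: "i < dim_row A \<Longrightarrow> j < dim_col X \<Longrightarrow>
   lmul scale A X $$ (i,j) = (\<Sum>p<dim_col A. scale (A $$ (i,p)) (X $$ (p,j)))"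
  by (simp add: lmul_def)
lemma rmul_idx: "i < dim_row X \<Longrightarrow> j < dim_col B \<Longrightarrow>
   rmul scale X B $$ (i,j) = (\<Sum>q<dim_row B. scale (B $$ (q,j)) (X $$ (i,q)))"
  by (simp add: rmul_def)

lemma lmul_lmul: assumes A: "A \<in> carrier_mat m p" and C: "C \<in> carrier_mat p p'" and X: "X \<in> carrier_mat p' q"
  shows "lmul scale A (lmul scale C X) = lmul scale (A * C) X"
proof (rule eq_matI)
  fix i j assume ij: "i < dim_row (lmul scale (A * C) X)" "j < dim_col (lmul scale (A * C) X)"
  hence i: "i < m" and j: "j < q" using A X by auto
  have "lmul scale A (lmul scale C X) $$ (i,j) = (\<Sum>a<p. \<Sum>c<p'. scale (A $$ (i,a) * C $$ (a,c)) (X $$ (c,j)))"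
    using A C X i j by (simp add: lmul_idx V.scale_sum_right)
  also have "\<dots> = (\<Sum>c<p'. \<Sum>a<p. scale (A $$ (i,a) * C $$ (a,c)) (X $$ (c,j)))" by (rule sum.swap)
  also have "\<dots> = lmul scale (A * C) X $$ (i,j)"
    using A C X i j by (simp add: lmul_idx row_col V.scale_sum_left)
  finally show "lmul scale A (lmul scale C X) $$ (i,j) = lmul scale (A * C) X $$ (i,j)" .
qed (use A C X in auto)

lemma rmul_rmul: assumes X: "X \<in> carrier_mat m q'" and D: "D \<in> carrier_mat q' q" and B: "B \<in> carrier_mat q r"
  shows "rmul scale (rmul scale X D) B = rmul scale X (D * B)"
proof (rule eq_matI)
  fix i j assume ij: "i < dim_row (rmul scale X (D * B))" "j < dim_col (rmul scale X (D * B))"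
  hence i: "i < m" and j: "j < r" using X B by auto
  have "rmul scale (rmul scale X D) B $$ (i,j) = (\<Sum>b<q. \<Sum>d<q'. scale (D $$ (d,b) * B $$ (b,j)) (X $$ (i,d)))"
    using X D B i j by (simp add: rmul_idx V.scale_sum_right mult.commute)
  also have "\<dots> = (\<Sum>d<q'. \<Sum>b<q. scale (D $$ (d,b) * B $$ (b,j)) (X $$ (i,d)))" by (rule sum.swap)
  also have "\<dots> = rmul scale X (D * B) $$ (i,j)"
    using X D B i j by (simp add: rmul_idx row_col V.scale_sum_left)
  finally show "rmul scale (rmul scale X D) B $$ (i,j) = rmul scale X (D * B) $$ (i,j)" .
qed (use X B in auto)

lemma rmul_lmul: assumes A: "A \<in> carrier_mat m p" and X: "X \<in> carrier_mat p q" and B: "B \<in> carrier_mat q r"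
  shows "rmul scale (lmul scale A X) B = lmul scale A (rmul scale X B)"
proof (rule eq_matI)
  fix i j assume ij: "i < dim_row (lmul scale A (rmul scale X B))" "j < dim_col (lmul scale A (rmul scale X B))"
  hence i: "i < m" and j: "j < r" using A B by auto
  have "rmul scale (lmul scale A X) B $$ (i,j) = (\<Sum>b<q. \<Sum>a<p. scale (B $$ (b,j) * A $$ (i,a)) (X $$ (a,b)))"
    using A X B i j by (simp add: rmul_idx lmul_idx V.scale_sum_right)
  also have "\<dots> = (\<Sum>a<p. \<Sum>b<q. scale (B $$ (b,j) * A $$ (i,a)) (X $$ (a,b)))" by (rule sum.swap)
  also have "\<dots> = lmul scale A (rmul scale X B) $$ (i,j)"
    using A X B i j by (simp add: rmul_idx lmul_idx V.scale_sum_right mult.commute)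
  finally show "rmul scale (lmul scale A X) B $$ (i,j) = lmul scale A (rmul scale X B) $$ (i,j)" .
qed (use A B in auto)

lemma lmul_carrier: "A \<in> carrier_mat m p \<Longrightarrow> X \<in> carrier_mat p q \<Longrightarrow> lmul scale A X \<in> carrier_mat m q"
  by (intro carrier_matI) auto
lemma rmul_carrier: "X \<in> carrier_mat m q \<Longrightarrow> B \<in> carrier_mat q r \<Longrightarrow> rmul scale X B \<in> carrier_mat m r"
  by (intro carrier_matI) auto

lemma bimul_bimul: assumes A: "A \<in> carrier_mat m p" and C: "C \<in> carrier_mat p p'" and X: "X \<in> carrier_mat p' q'"
  and D: "D \<in> carrier_mat q' q" and B: "B \<in> carrier_mat q r"
  shows "bimul scale A (bimul scale C X D) B = bimul scale (A * C) X (D * B)"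
proof -
  have CX: "lmul scale C X \<in> carrier_mat p q'" by (rule lmul_carrier[OF C X])
  have "bimul scale A (bimul scale C X D) B = rmul scale (lmul scale A (rmul scale (lmul scale C X) D)) B"
    by (simp add: bimul_def)
  also have "lmul scale A (rmul scale (lmul scale C X) D) = rmul scale (lmul scale A (lmul scale C X)) D"
    by (rule rmul_lmul[OF A CX D, symmetric])
  also have "lmul scale A (lmul scale C X) = lmul scale (A * C) X" by (rule lmul_lmul[OF A C X])
  also have "rmul scale (rmul scale (lmul scale (A * C) X) D) B = rmul scale (lmul scale (A * C) X) (D * B)"
    by (rule rmul_rmul[OF lmul_carrier[OF mult_carrier_mat[OF A C] X] D B])
  finally show ?thesis by (simp add: bimul_def)
qed

lemma compress_compress: assumes b: "b \<in> carrier_mat n m" and b': "b' \<in> carrier_mat k n" and Y: "Y \<in> carrier_mat k k"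
  shows "compress scale cj b (compress scale cj b' Y) = compress scale cj (b' * b) Y"
  unfolding compress_def
  by (simp add: bimul_bimul[OF adjm_carrier[OF b] adjm_carrier[OF b'] Y b' b] adjm_mult[OF b' b])

lemma compress_dims[simp]: "dim_row (compress scale cj A X) = dim_col A" "dim_col (compress scale cj A X) = dim_col A"
  by (simp_all add: compress_def)
lemma compress_carrier: "A \<in> carrier_mat n m \<Longrightarrow> compress scale cj A X \<in> carrier_mat m m"
  by (intro carrier_matI) auto

lemma scale_delta: "scale (if P then 1 else 0) x = (if P then x else 0)" by simp

lemma compress_one: assumes Y: "Y \<in> carrier_mat n n" shows "compress scale cj (1\<^sub>m n) Y = Y"
proof (rule eq_matI)
  fix i j assume "i < dim_row Y" "j < dim_col Y"
  hence i: "i < n" and j: "j < n" using Y by auto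
  have "compress scale cj (1\<^sub>m n) Y $$ (i,j) = (\<Sum>a<n. \<Sum>b<n. scale ((1\<^sub>m n :: 'k mat) $$ (i,a) * (1\<^sub>m n :: 'k mat) $$ (b,j)) (Y $$ (a,b)))"
    unfolding compress_def using Y i j by (simp add: bimul_idx[OF one_carrier_mat Y one_carrier_mat])
  also have "\<dots> = (\<Sum>a<n. \<Sum>b<n. if a = i then (if b = j then Y $$ (a,b) else 0) else 0)"
    by (rule sum.cong[OF refl], rule sum.cong[OF refl]) (use i j in auto)
  also have "\<dots> = (\<Sum>a<n. if a = i then Y $$ (a,j) else 0)"
    by (rule sum.cong[OF refl]) (use j in auto)
  also have "\<dots> = Y $$ (i,j)" using i by simp
  finally show "compress scale cj (1\<^sub>m n) Y $$ (i,j) = Y $$ (i,j)" .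
qed (use Y in \<open>auto simp: compress_def\<close>)

lemma compress_zero: assumes X: "X \<in> carrier_mat n n" shows "compress scale cj (0\<^sub>m n m) X = 0\<^sub>m m m"
proof (rule eq_matI)
  fix i j assume "i < dim_row (0\<^sub>m m m :: 'e mat)" "j < dim_col (0\<^sub>m m m :: 'e mat)"
  hence i: "i < m" and j: "j < m" by auto
  show "compress scale cj (0\<^sub>m n m) X $$ (i,j) = 0\<^sub>m m m $$ (i,j)"
    unfolding compress_def adjm_zero using i j by (simp add: bimul_idx[OF zero_carrier_mat X zero_carrier_mat])
qed (auto simp: compress_def)

lemma map_f_bimul: assumes A: "A \<in> carrier_mat m p" and X: "X \<in> carrier_mat p q" and B: "B \<in> carrier_mat q r"
  shows "map_mat f (bimul scale A X B) = A * map_mat f X * B"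
proof (rule eq_matI)
  fix i j assume "i < dim_row (A * map_mat f X * B)" "j < dim_col (A * map_mat f X * B)"
  hence i: "i < m" and j: "j < r" using A B by auto
  have AX: "A * map_mat f X \<in> carrier_mat m q" using A X by simp
  have "map_mat f (bimul scale A X B) $$ (i,j) = (\<Sum>a<p. \<Sum>b<q. A $$ (i,a) * B $$ (b,j) * f (X $$ (a,b)))"
    using A X B i j by (simp add: bimul_idx[OF A X B] f_sum f_scale)
  also have "\<dots> = (\<Sum>b<q. \<Sum>a<p. A $$ (i,a) * B $$ (b,j) * f (X $$ (a,b)))" by (rule sum.swap)
  also have "\<dots> = (\<Sum>b<q. (\<Sum>a<p. A $$ (i,a) * map_mat f X $$ (a,b)) * B $$ (b,j))"
    using X i by (simp add: sum_distrib_right sum_distrib_left ac_simps)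
  also have "\<dots> = (\<Sum>b<q. (A * map_mat f X) $$ (i,b) * B $$ (b,j))"
  proof (rule sum.cong[OF refl])
    have MX: "map_mat f X \<in> carrier_mat p q" using X by simp
    fix b assume "b \<in> {..<q}"
    thus "(\<Sum>a<p. A $$ (i,a) * map_mat f X $$ (a,b)) * B $$ (b,j) = (A * map_mat f X) $$ (i,b) * B $$ (b,j)"
      using mult_idx[OF A MX i, of b] by simp
  qed
  also have "\<dots> = (A * map_mat f X * B) $$ (i,j)"
    by (rule mult_idx[OF AX B i j, symmetric])
  finally show "map_mat f (bimul scale A X B) $$ (i,j) = (A * map_mat f X * B) $$ (i,j)" .
qed (use A B in auto)

lemma map_f_diff: "X \<in> carrier_mat n m \<Longrightarrow> Y \<in> carrier_mat n m \<Longrightarrow> map_mat f (X - Y) = map_mat f X - map_mat f Y"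
  by (intro eq_matI) (auto simp: f_diff)
lemma map_f_add: "X \<in> carrier_mat n m \<Longrightarrow> Y \<in> carrier_mat n m \<Longrightarrow> map_mat f (X + Y) = map_mat f X + map_mat f Y"
  by (intro eq_matI) (auto simp: f_add)
lemma map_f_msmul: "map_mat f (msmul scale c X) = c \<cdot>\<^sub>m map_mat f X"
  by (intro eq_matI) (auto simp: msmul_def f_scale)

lemma msmul_dims[simp]: "dim_row (msmul scale c X) = dim_row X" "dim_col (msmul scale c X) = dim_col X"
  by (simp_all add: msmul_def)
lemma msmul_carrier: "X \<in> carrier_mat n m \<Longrightarrow> msmul scale c X \<in> carrier_mat n m"
  by (intro carrier_matI) auto
lemma msmul_msmul: "msmul scale a (msmul scale b X) = msmul scale (a * b) X"
  by (intro eq_matI) (auto simp: msmul_def)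
lemma msmul_one: "msmul scale 1 X = X"
  by (intro eq_matI) (auto simp: msmul_def)
lemma msmul_diff: "X \<in> carrier_mat n m \<Longrightarrow> Y \<in> carrier_mat n m \<Longrightarrow>
  msmul scale c (X - Y) = msmul scale c X - msmul scale c Y"
  by (intro eq_matI) (auto simp: msmul_def V.scale_right_diff_distrib)
lemma mstar_msmul: "mstar sinv (msmul scale c X) = msmul scale (cj c) (mstar sinv X)"
  by (intro eq_matI) (auto simp: msmul_def mstar_def sinv_scale)

lemma bimul_smult: assumes A: "A \<in> carrier_mat m p" and X: "X \<in> carrier_mat p q" and B: "B \<in> carrier_mat q r"
  shows "bimul scale (a \<cdot>\<^sub>m A) X (b \<cdot>\<^sub>m B) = msmul scale (a * b) (bimul scale A X B)"
proof (rule eq_matI)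
  fix i j assume "i < dim_row (msmul scale (a * b) (bimul scale A X B))" "j < dim_col (msmul scale (a * b) (bimul scale A X B))"
  hence i: "i < m" and j: "j < r" using A B by auto
  show "bimul scale (a \<cdot>\<^sub>m A) X (b \<cdot>\<^sub>m B) $$ (i,j) = msmul scale (a * b) (bimul scale A X B) $$ (i,j)"
    using A X B i j
    by (simp add: bimul_idx[OF smult_carrier_mat[OF A] X smult_carrier_mat[OF B]] bimul_idx[OF A X B]
        msmul_def V.scale_sum_right ac_simps)
qed (use A B in auto)


definition stack :: "nat \<Rightarrow> 'k mat \<Rightarrow> 'k mat \<Rightarrow> 'k mat" where
  "stack n a1 a2 = mat (n + n) n (\<lambda>(i,j). if i < n then a1 $$ (i,j) else a2 $$ (i - n, j))"

lemma stack_carrier: "stack n a1 a2 \<in> carrier_mat (n + n) n"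
  by (simp add: stack_def)

lemma stack_gram: assumes a1: "a1 \<in> carrier_mat n n" and a2: "a2 \<in> carrier_mat n n"
  shows "adjm cj (stack n a1 a2) * stack n a1 a2 = adjm cj a1 * a1 + adjm cj a2 * a2"
proof (rule eq_matI)
  fix i j assume "i < dim_row (adjm cj a1 * a1 + adjm cj a2 * a2)" "j < dim_col (adjm cj a1 * a1 + adjm cj a2 * a2)"
  hence i: "i < n" and j: "j < n" using a1 a2 by auto
  have "(adjm cj (stack n a1 a2) * stack n a1 a2) $$ (i,j)
      = (\<Sum>k<n+n. adjm cj (stack n a1 a2) $$ (i,k) * stack n a1 a2 $$ (k,j))"
    by (rule mult_idx[OF adjm_carrier[OF stack_carrier] stack_carrier i j])
  also have "\<dots> = (\<Sum>k<n. cj (a1 $$ (k,i)) * a1 $$ (k,j)) + (\<Sum>k<n. cj (a2 $$ (k,i)) * a2 $$ (k,j))"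
    using i j by (simp add: sum_lessThan_add_split stack_def)
  also have "\<dots> = (adjm cj a1 * a1 + adjm cj a2 * a2) $$ (i,j)"
    using i j a1 a2 by (simp add: mult_idx[OF adjm_carrier[OF a1] a1 i j] mult_idx[OF adjm_carrier[OF a2] a2 i j])
  finally show "(adjm cj (stack n a1 a2) * stack n a1 a2) $$ (i,j) = (adjm cj a1 * a1 + adjm cj a2 * a2) $$ (i,j)" .
qed (use a1 a2 in \<open>auto simp: stack_def\<close>)

lemma dsum_carrier: "X \<in> carrier_mat n n \<Longrightarrow> Y \<in> carrier_mat m m \<Longrightarrow> dsum X Y \<in> carrier_mat (n + m) (n + m)"
  unfolding dsum_def by simp

lemma stack_bimul: assumes a1: "a1 \<in> carrier_mat n n" and a2: "a2 \<in> carrier_mat n n"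
  and X1: "X1 \<in> carrier_mat n n" and X2: "X2 \<in> carrier_mat n n"
  shows "bimul scale (adjm cj (stack n a1 a2)) (dsum X1 (msmul scale (-1) X2)) (stack n a1 a2)
     = compress scale cj a1 X1 - compress scale cj a2 X2"
proof (rule eq_matI)
  let ?S = "stack n a1 a2"
  let ?D = "dsum X1 (msmul scale (-1) X2)"
  have D: "?D \<in> carrier_mat (n+n) (n+n)" by (rule dsum_carrier[OF X1 msmul_carrier[OF X2]])
  fix i j assume "i < dim_row (compress scale cj a1 X1 - compress scale cj a2 X2)"
    "j < dim_col (compress scale cj a1 X1 - compress scale cj a2 X2)"
  hence i: "i < n" and j: "j < n" using a1 a2 by auto
  have "bimul scale (adjm cj ?S) ?D ?S $$ (i,j)
     = (\<Sum>a<n+n. \<Sum>b<n+n. scale (adjm cj ?S $$ (i,a) * ?S $$ (b,j)) (?D $$ (a,b)))"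
    by (rule bimul_idx[OF adjm_carrier[OF stack_carrier] D stack_carrier i j])
  also have "\<dots> = (\<Sum>a<n. \<Sum>b<n. scale (cj (a1 $$ (a,i)) * a1 $$ (b,j)) (X1 $$ (a,b)))
      + (\<Sum>a<n. \<Sum>b<n. scale (cj (a2 $$ (a,i)) * a2 $$ (b,j)) (- (X2 $$ (a,b))))"
    using i j X1 X2 by (simp add: sum_lessThan_add_split stack_def dsum_def msmul_def)
  also have "\<dots> = (compress scale cj a1 X1 - compress scale cj a2 X2) $$ (i,j)"
    unfolding compress_def using i j a1 a2 X1 X2
    by (simp add: bimul_idx[OF adjm_carrier[OF a1] X1 a1 i j] bimul_idx[OF adjm_carrier[OF a2] X2 a2 i j]
        sum_negf)
  finally show "bimul scale (adjm cj ?S) ?D ?S $$ (i,j) = (compress scale cj a1 X1 - compress scale cj a2 X2) $$ (i,j)" .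
qed (use a1 a2 in \<open>auto simp: stack_def compress_def\<close>)

lemma lower: assumes n: "n > 0" and a1: "a1 \<in> carrier_mat n n" and a2: "a2 \<in> carrier_mat n n"
  and X1: "X1 \<in> K n" and X2: "X2 \<in> K n"
  shows "nrm n (compress scale cj a1 X1 - compress scale cj a2 X2) \<le> opnorm (adjm cj a1 * a1 + adjm cj a2 * a2)"
proof -
  let ?S = "stack n a1 a2"
  let ?D = "dsum X1 (msmul scale (-1) X2)"
  have X1c: "X1 \<in> carrier_mat n n" and X2c: "X2 \<in> carrier_mat n n" using K_carrier n X1 X2 by auto
  have mX2: "msmul scale (-1) X2 \<in> carrier_mat n n" by (rule msmul_carrier[OF X2c])
  have D: "?D \<in> carrier_mat (n+n) (n+n)" by (rule dsum_carrier[OF X1c mX2])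
  have nn: "n + n > 0" using n by simp
  have "nrm (n+n) ?D = max (nrm n X1) (nrm n (msmul scale (-1) X2))"
    by (rule nrm_dsum[OF n n X1c mX2])
  also have "nrm n (msmul scale (-1) X2) = nrm n X2" using nrm_smult[OF n X2c, of "-1"] by simp
  finally have nD: "nrm (n+n) ?D \<le> 1" using K_nrm[OF n X1] K_nrm[OF n X2] by simp
  have nD0: "nrm (n+n) ?D \<ge> 0" by (rule nrm_nonneg[OF nn D])
  have "nrm n (compress scale cj a1 X1 - compress scale cj a2 X2) = nrm n (bimul scale (adjm cj ?S) ?D ?S)"
    using stack_bimul[OF a1 a2 X1c X2c] by simp
  also have "\<dots> \<le> opnorm (adjm cj ?S) * nrm (n+n) ?D * opnorm ?S"
    by (rule ruan[OF nn n adjm_carrier[OF stack_carrier] D stack_carrier])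
  also have "\<dots> \<le> opnorm ?S * 1 * opnorm ?S"
  proof (rule mult_right_mono[OF _ opnorm_nonneg])
    show "opnorm (adjm cj ?S) * nrm (n+n) ?D \<le> opnorm ?S * 1"
      by (rule mult_mono[OF opnorm_adjm_le[OF stack_carrier] nD opnorm_nonneg nD0])
  qed
  also have "\<dots> = (opnorm ?S)^2" by (simp add: power2_eq_square)
  also have "\<dots> \<le> opnorm (adjm cj ?S * ?S)" by (rule opnorm_sq_le[OF stack_carrier])
  also have "\<dots> = opnorm (adjm cj a1 * a1 + adjm cj a2 * a2)" using stack_gram[OF a1 a2] by simp
  finally show ?thesis .
qed


lemma psd_carrier: "psd_mat cj n c \<Longrightarrow> c \<in> carrier_mat n n" by (simp add: psd_mat_def)
lemma psd_sa: "psd_mat cj n c \<Longrightarrow> adjm cj c = c" by (simp add: psd_mat_def)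
lemma psd_qf: assumes "psd_mat cj n c" "v \<in> carrier_vec n" shows "\<exists>r\<ge>0. ip v (c *\<^sub>v v) = of_real r"
proof -
  have d: "dim_vec v = n" using assms(2) by simp
  from assms show ?thesis unfolding psd_mat_def ip_def d by blast
qed

lemma qf_sq: assumes c: "c \<in> carrier_mat n n" and sa: "adjm cj c = c" and v: "v \<in> carrier_vec n"
  shows "ip v ((c * c) *\<^sub>v v) = of_real ((vnorm (c *\<^sub>v v))^2)"
proof -
  have cv: "c *\<^sub>v v \<in> carrier_vec n" using c v by simp
  have "ip v ((c * c) *\<^sub>v v) = ip v (c *\<^sub>v (c *\<^sub>v v))" using assoc_mult_mat_vec[OF c c v] by simp
  also have "\<dots> = ip (adjm cj c *\<^sub>v v) (c *\<^sub>v v)" by (rule ip_adj[OF c v cv])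
  also have "\<dots> = of_real ((vnorm (c *\<^sub>v v))^2)" unfolding sa by (rule ip_self)
  finally show ?thesis .
qed

lemma qf_bound: assumes c1: "psd_mat cj n c1" and c2: "psd_mat cj n c2"
  and M: "psd_mat cj n (of_real t \<cdot>\<^sub>m 1\<^sub>m n - (c1 * c1 + c2 * c2))" and v: "v \<in> carrier_vec n"
  shows "(vnorm (c1 *\<^sub>v v))^2 + (vnorm (c2 *\<^sub>v v))^2 \<le> t * (vnorm v)^2"
proof -
  have c1c: "c1 \<in> carrier_mat n n" and c2c: "c2 \<in> carrier_mat n n" using c1 c2 by (simp_all add: psd_carrier)
  have C1: "c1 * c1 \<in> carrier_mat n n" and C2: "c2 * c2 \<in> carrier_mat n n" using c1c c2c by simp_all
  have P: "c1 * c1 + c2 * c2 \<in> carrier_mat n n" using C1 C2 by simp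
  have T: "(of_real t :: 'k) \<cdot>\<^sub>m 1\<^sub>m n \<in> carrier_mat n n" by simp
  have Mv: "(of_real t \<cdot>\<^sub>m 1\<^sub>m n - (c1 * c1 + c2 * c2)) *\<^sub>v v
      = (of_real t :: 'k) \<cdot>\<^sub>v v - ((c1 * c1) *\<^sub>v v + (c2 * c2) *\<^sub>v v)"
    using v by (simp add: minus_mult_distrib_mat_vec[OF T P v] add_mult_distrib_mat_vec[OF C1 C2 v]
        smult_mat_vec)
  obtain \<rho> where \<rho>: "\<rho> \<ge> 0" "ip v ((of_real t \<cdot>\<^sub>m 1\<^sub>m n - (c1 * c1 + c2 * c2)) *\<^sub>v v) = of_real \<rho>"
    using psd_qf[OF M v] by blast
  have "ip v ((of_real t \<cdot>\<^sub>m 1\<^sub>m n - (c1 * c1 + c2 * c2)) *\<^sub>v v)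
      = of_real t * ip v v - (ip v ((c1 * c1) *\<^sub>v v) + ip v ((c2 * c2) *\<^sub>v v))"
    unfolding Mv using carrier_vecD[OF v] carrier_matD[OF C1] carrier_matD[OF C2]
    by (simp add: ip_diff_right ip_add_right ip_smult_right)
  also have "\<dots> = of_real (t * (vnorm v)^2 - ((vnorm (c1 *\<^sub>v v))^2 + (vnorm (c2 *\<^sub>v v))^2))"
    by (simp add: ip_self qf_sq[OF c1c psd_sa[OF c1] v] qf_sq[OF c2c psd_sa[OF c2] v])
  finally have "t * (vnorm v)^2 - ((vnorm (c1 *\<^sub>v v))^2 + (vnorm (c2 *\<^sub>v v))^2) = \<rho>"
    using \<rho>(2) by (metis of_real_eq_iff)
  thus ?thesis using \<rho>(1) by linarith
qed

lemma opn_bound: assumes c1: "psd_mat cj n c1" and c2: "psd_mat cj n c2"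
  and M: "psd_mat cj n (of_real t \<cdot>\<^sub>m 1\<^sub>m n - (c1 * c1 + c2 * c2))" and r: "r \<ge> 0" and t: "t \<ge> 0"
  shows "opnorm ((of_real r :: 'k) \<cdot>\<^sub>m (c1 * c1 + c2 * c2)) \<le> r * t"
    "opnorm ((of_real r :: 'k) \<cdot>\<^sub>m (c1 * c1 - c2 * c2)) \<le> r * t"
proof -
  have c1c: "c1 \<in> carrier_mat n n" and c2c: "c2 \<in> carrier_mat n n" using c1 c2 by (simp_all add: psd_carrier)
  have C1: "c1 * c1 \<in> carrier_mat n n" and C2: "c2 * c2 \<in> carrier_mat n n" using c1c c2c by simp_all
  have sa1: "adjm cj (c1 * c1) = c1 * c1" using adjm_mult[OF c1c c1c] psd_sa[OF c1] by simp
  have sa2: "adjm cj (c2 * c2) = c2 * c2" using adjm_mult[OF c2c c2c] psd_sa[OF c2] by simp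
  have s: "r * t \<ge> 0" using r t by simp
  show "opnorm ((of_real r :: 'k) \<cdot>\<^sub>m (c1 * c1 + c2 * c2)) \<le> r * t"
  proof (rule polar[OF smult_carrier_mat[OF add_carrier_mat[OF C2]] _ s])
    show "adjm cj ((of_real r :: 'k) \<cdot>\<^sub>m (c1 * c1 + c2 * c2)) = (of_real r :: 'k) \<cdot>\<^sub>m (c1 * c1 + c2 * c2)"
      by (simp add: adjm_smult_real adjm_add[OF C1 C2] sa1 sa2)
    fix v :: "'k vec" assume v: "v \<in> carrier_vec n"
    have "ip v (((of_real r :: 'k) \<cdot>\<^sub>m (c1 * c1 + c2 * c2)) *\<^sub>v v)
       = of_real r * (ip v ((c1 * c1) *\<^sub>v v) + ip v ((c2 * c2) *\<^sub>v v))"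
      using carrier_vecD[OF v] carrier_matD[OF C1] carrier_matD[OF C2]
      by (simp add: smult_mat_vec add_mult_distrib_mat_vec[OF C1 C2 v] ip_smult_right ip_add_right)
    also have "\<dots> = of_real (r * ((vnorm (c1 *\<^sub>v v))^2 + (vnorm (c2 *\<^sub>v v))^2))"
      by (simp add: qf_sq[OF c1c psd_sa[OF c1] v] qf_sq[OF c2c psd_sa[OF c2] v])
    finally show "\<exists>\<rho>. ip v (((of_real r :: 'k) \<cdot>\<^sub>m (c1 * c1 + c2 * c2)) *\<^sub>v v) = of_real \<rho> \<and> \<bar>\<rho>\<bar> \<le> r * t * (vnorm v)^2"
      using qf_bound[OF c1 c2 M v] r by (intro exI[of _ "r * ((vnorm (c1 *\<^sub>v v))^2 + (vnorm (c2 *\<^sub>v v))^2)"])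
        (simp add: mult_left_mono mult.assoc)
  qed
  show "opnorm ((of_real r :: 'k) \<cdot>\<^sub>m (c1 * c1 - c2 * c2)) \<le> r * t"
  proof (rule polar[OF smult_carrier_mat[OF minus_carrier_mat[OF C2]] _ s])
    show "adjm cj ((of_real r :: 'k) \<cdot>\<^sub>m (c1 * c1 - c2 * c2)) = (of_real r :: 'k) \<cdot>\<^sub>m (c1 * c1 - c2 * c2)"
      by (simp add: adjm_smult_real adjm_diff[OF C1 C2] sa1 sa2)
    fix v :: "'k vec" assume v: "v \<in> carrier_vec n"
    have "ip v (((of_real r :: 'k) \<cdot>\<^sub>m (c1 * c1 - c2 * c2)) *\<^sub>v v)
       = of_real r * (ip v ((c1 * c1) *\<^sub>v v) - ip v ((c2 * c2) *\<^sub>v v))"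
      using carrier_vecD[OF v] carrier_matD[OF C1] carrier_matD[OF C2]
      by (simp add: smult_mat_vec minus_mult_distrib_mat_vec[OF C1 C2 v] ip_smult_right ip_diff_right)
    also have "\<dots> = of_real (r * ((vnorm (c1 *\<^sub>v v))^2 - (vnorm (c2 *\<^sub>v v))^2))"
      by (simp add: qf_sq[OF c1c psd_sa[OF c1] v] qf_sq[OF c2c psd_sa[OF c2] v])
    finally have e: "ip v (((of_real r :: 'k) \<cdot>\<^sub>m (c1 * c1 - c2 * c2)) *\<^sub>v v) = of_real (r * ((vnorm (c1 *\<^sub>v v))^2 - (vnorm (c2 *\<^sub>v v))^2))" .
    have "\<bar>r * ((vnorm (c1 *\<^sub>v v))^2 - (vnorm (c2 *\<^sub>v v))^2)\<bar> \<le> r * ((vnorm (c1 *\<^sub>v v))^2 + (vnorm (c2 *\<^sub>v v))^2)"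
    proof -
      have "\<bar>(vnorm (c1 *\<^sub>v v))^2 - (vnorm (c2 *\<^sub>v v))^2\<bar> \<le> (vnorm (c1 *\<^sub>v v))^2 + (vnorm (c2 *\<^sub>v v))^2"
        unfolding abs_le_iff using zero_le_power2[of "vnorm (c1 *\<^sub>v v)"] zero_le_power2[of "vnorm (c2 *\<^sub>v v)"] by linarith
      thus ?thesis using r by (simp add: abs_mult mult_left_mono)
    qed
    also have "\<dots> \<le> r * (t * (vnorm v)^2)" using qf_bound[OF c1 c2 M v] r by (simp add: mult_left_mono)
    finally show "\<exists>\<rho>. ip v (((of_real r :: 'k) \<cdot>\<^sub>m (c1 * c1 - c2 * c2)) *\<^sub>v v) = of_real \<rho> \<and> \<bar>\<rho>\<bar> \<le> r * t * (vnorm v)^2"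
      using e by (intro exI[of _ "r * ((vnorm (c1 *\<^sub>v v))^2 - (vnorm (c2 *\<^sub>v v))^2)"]) (simp add: mult.assoc)
  qed
qed


lemma smult_smult_times: "a \<cdot>\<^sub>m (b \<cdot>\<^sub>m A) = (a * b :: 'k) \<cdot>\<^sub>m A"
  by (intro eq_matI) auto

lemma gram_smult: assumes c: "c \<in> carrier_mat n n" and sa: "adjm cj c = c" and r: "r \<ge> 0"
  shows "adjm cj ((of_real (sqrt r) :: 'k) \<cdot>\<^sub>m c) * ((of_real (sqrt r) :: 'k) \<cdot>\<^sub>m c) = (of_real r :: 'k) \<cdot>\<^sub>m (c * c)"
proof -
  let ?s = "(of_real (sqrt r) :: 'k)"
  have ss: "?s * ?s = of_real r" using r by (simp flip: of_real_mult)
  have "adjm cj (?s \<cdot>\<^sub>m c) = ?s \<cdot>\<^sub>m c" by (simp add: adjm_smult_real sa)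
  moreover have "(?s \<cdot>\<^sub>m c) * (?s \<cdot>\<^sub>m c) = (?s * ?s) \<cdot>\<^sub>m (c * c)"
    using c by (simp add: mult_smult_assoc_mat[OF c smult_carrier_mat[OF c]] mult_smult_distrib[OF c c] smult_smult_times)
  ultimately show ?thesis using ss by simp
qed

lemma decomp: assumes n: "n > 0" and X: "X \<in> sa_mats sinv n" and rp: "nrm n X > 0" and t: "t > 1"
  shows "\<exists>a1 a2 X1 X2 c1 c2. a1 \<in> carrier_mat n n \<and> a2 \<in> carrier_mat n n \<and> X1 \<in> K n \<and> X2 \<in> K n \<and>
     X = compress scale cj a1 X1 - compress scale cj a2 X2 \<and>
     adjm cj a1 * a1 + adjm cj a2 * a2 = (of_real (nrm n X) :: 'k) \<cdot>\<^sub>m (c1 * c1 + c2 * c2) \<and>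
     map_mat f X = (of_real (nrm n X) :: 'k) \<cdot>\<^sub>m (c1 * c1 - c2 * c2) \<and>
     psd_mat cj n c1 \<and> psd_mat cj n c2 \<and> psd_mat cj n (of_real t \<cdot>\<^sub>m 1\<^sub>m n - (c1 * c1 + c2 * c2))"
proof -
  define r where "r = nrm n X"
  have r: "r > 0" using rp unfolding r_def .
  have Xc: "X \<in> carrier_mat n n" and Xsa: "mstar sinv X = X" using X unfolding sa_mats_def by auto
  define \<rho> where "\<rho> = (of_real (1/r) :: 'k)"
  have cj\<rho>: "cj \<rho> = \<rho>" unfolding \<rho>_def by (rule cj_of_real)
  define X' where "X' = msmul scale \<rho> X"
  have X'c: "X' \<in> carrier_mat n n" unfolding X'_def by (rule msmul_carrier[OF Xc])
  have X'sa: "X' \<in> sa_mats sinv n" unfolding sa_mats_def X'_def using X'c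
    by (simp add: X'_def mstar_msmul cj\<rho> Xsa)
  have "nrm n X' = norm \<rho> * r" unfolding X'_def r_def by (rule nrm_smult[OF n Xc])
  also have "\<dots> = 1" unfolding \<rho>_def using r by (simp add: norm_divide)
  finally have nX': "nrm n X' \<le> 1" by simp
  obtain c1 c2 X1 X2 where c1: "psd_mat cj n c1" and c2: "psd_mat cj n c2"
    and M: "psd_mat cj n (of_real t \<cdot>\<^sub>m 1\<^sub>m n - (c1 * c1 + c2 * c2))"
    and X1: "X1 \<in> K n" and X2: "X2 \<in> K n" and X'eq: "X' = bimul scale c1 X1 c1 - bimul scale c2 X2 c2"
    using iii[OF t n X'sa nX'] by blast
  have c1c: "c1 \<in> carrier_mat n n" and c2c: "c2 \<in> carrier_mat n n" using c1 c2 by (simp_all add: psd_carrier)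
  have X1c: "X1 \<in> carrier_mat n n" and X2c: "X2 \<in> carrier_mat n n" using K_carrier[OF n] X1 X2 by auto
  define s where "s = (of_real (sqrt r) :: 'k)"
  have cjs: "cj s = s" unfolding s_def by (rule cj_of_real)
  have ss: "s * s = of_real r" unfolding s_def using r by (simp flip: of_real_mult)
  define a1 where "a1 = s \<cdot>\<^sub>m c1"
  define a2 where "a2 = s \<cdot>\<^sub>m c2"
  have a1: "a1 \<in> carrier_mat n n" and a2: "a2 \<in> carrier_mat n n" unfolding a1_def a2_def using c1c c2c by simp_all
  have comp: "compress scale cj (s \<cdot>\<^sub>m c) Y = msmul scale (of_real r) (bimul scale c Y c)"
    if c: "psd_mat cj n c" and Y: "Y \<in> carrier_mat n n" for c Y
  proof -
    have cc: "c \<in> carrier_mat n n" using c by (simp add: psd_carrier)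
    have "compress scale cj (s \<cdot>\<^sub>m c) Y = bimul scale (s \<cdot>\<^sub>m c) Y (s \<cdot>\<^sub>m c)"
      unfolding compress_def by (simp add: adjm_smult cjs psd_sa[OF c])
    also have "\<dots> = msmul scale (s * s) (bimul scale c Y c)" by (rule bimul_smult[OF cc Y cc])
    finally show ?thesis unfolding ss .
  qed
  have B1: "bimul scale c1 X1 c1 \<in> carrier_mat n n" by (rule bimul_carrier[OF c1c c1c])
  have B2: "bimul scale c2 X2 c2 \<in> carrier_mat n n" by (rule bimul_carrier[OF c2c c2c])
  have "compress scale cj a1 X1 - compress scale cj a2 X2 = msmul scale (of_real r) X'"
    unfolding a1_def a2_def comp[OF c1 X1c] comp[OF c2 X2c] X'eq by (rule msmul_diff[OF B1 B2, symmetric])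
  also have "\<dots> = msmul scale (of_real r * \<rho>) X" unfolding X'_def by (rule msmul_msmul)
  also have "of_real r * \<rho> = 1" unfolding \<rho>_def using r by (simp flip: of_real_mult)
  finally have Xeq: "X = compress scale cj a1 X1 - compress scale cj a2 X2" by (simp add: msmul_one)
  have G: "adjm cj a1 * a1 + adjm cj a2 * a2 = (of_real r :: 'k) \<cdot>\<^sub>m (c1 * c1 + c2 * c2)"
    unfolding a1_def a2_def s_def
    using gram_smult[OF c1c psd_sa[OF c1], of r] gram_smult[OF c2c psd_sa[OF c2], of r] r
    by (simp add: add_smult_distrib_left_mat[OF mult_carrier_mat[OF c1c c1c] mult_carrier_mat[OF c2c c2c]])
  have fK: "map_mat f Y = 1\<^sub>m n" if "Y \<in> K n" for Y using that K_def[OF n] by blast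
  have fcomp: "map_mat f (compress scale cj a Y) = adjm cj a * a" if a: "a \<in> carrier_mat n n" and Y: "Y \<in> K n" for a Y
  proof -
    have Yc: "Y \<in> carrier_mat n n" using K_carrier[OF n Y] .
    have "map_mat f (compress scale cj a Y) = adjm cj a * map_mat f Y * a"
      unfolding compress_def by (rule map_f_bimul[OF adjm_carrier[OF a] Yc a])
    thus ?thesis using fK[OF Y] a by simp
  qed
  have C1: "compress scale cj a1 X1 \<in> carrier_mat n n" by (rule compress_carrier[OF a1])
  have C2: "compress scale cj a2 X2 \<in> carrier_mat n n" by (rule compress_carrier[OF a2])
  have F: "map_mat f X = (of_real r :: 'k) \<cdot>\<^sub>m (c1 * c1 - c2 * c2)"
  proof -
    have "map_mat f X = adjm cj a1 * a1 - adjm cj a2 * a2"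
      by (subst Xeq, simp add: map_f_diff[OF C1 C2] fcomp[OF a1 X1] fcomp[OF a2 X2])
    also have "\<dots> = (of_real r :: 'k) \<cdot>\<^sub>m (c1 * c1) - (of_real r :: 'k) \<cdot>\<^sub>m (c2 * c2)"
      unfolding a1_def a2_def s_def
      using gram_smult[OF c1c psd_sa[OF c1], of r] gram_smult[OF c2c psd_sa[OF c2], of r] r by simp
    also have "\<dots> = (of_real r :: 'k) \<cdot>\<^sub>m (c1 * c1 - c2 * c2)"
      using c1c c2c by (intro eq_matI) (auto simp: algebra_simps)
    finally show ?thesis .
  qed
  show ?thesis
    by (rule exI[of _ a1], rule exI[of _ a2], rule exI[of _ X1], rule exI[of _ X2], rule exI[of _ c1], rule exI[of _ c2])
      (use a1 a2 X1 X2 Xeq G F c1 c2 M in \<open>simp add: r_def\<close>)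
qed


lemma opnorm_zero: "opnorm (0\<^sub>m n m :: 'k mat) = 0"
proof -
  have "opnorm (0\<^sub>m n m :: 'k mat) \<le> 0"
  proof (rule opnorm_least)
    fix v :: "'k vec" assume "v \<in> carrier_vec (dim_col (0\<^sub>m n m :: 'k mat))"
    hence d: "dim_vec v = m" by simp
    have "(0\<^sub>m n m :: 'k mat) *\<^sub>v v = 0\<^sub>v n" by (intro eq_vecI) (auto simp: scalar_prod_def d)
    thus "vnorm ((0\<^sub>m n m :: 'k mat) *\<^sub>v v) \<le> 0 * vnorm v" by simp
  qed simp
  thus ?thesis using opnorm_nonneg[of "0\<^sub>m n m :: 'k mat"] by simp
qed

lemma zero_sa: "0\<^sub>m n n \<in> sa_mats sinv n"
  unfolding sa_mats_def by (auto intro!: eq_matI simp: mstar_def)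

lemma K_nonempty: assumes n: "n > 0" shows "\<exists>k. k \<in> K n"
proof -
  have "nrm n (0\<^sub>m n n) = 0" using nrm_zero_iff[OF n, of "0\<^sub>m n n"] by simp
  hence "nrm n (0\<^sub>m n n) \<le> 1" by simp
  from iii[of 2 n, OF _ n zero_sa this] show ?thesis by auto
qed

lemma fsa: assumes X: "X \<in> sa_mats sinv n" shows "adjm cj (map_mat f X) = map_mat f X"
proof -
  have Xc: "X \<in> carrier_mat n n" and Xsa: "mstar sinv X = X" using X unfolding sa_mats_def by auto
  have e: "X $$ (i,j) = sinv (X $$ (j,i))" if "i < n" "j < n" for i j
  proof -
    have "X $$ (i,j) = mstar sinv X $$ (i,j)" using Xsa by simp
    also have "\<dots> = sinv (X $$ (j,i))" using that Xc by (simp add: mstar_def)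
    finally show ?thesis .
  qed
  show ?thesis
  proof (rule eq_matI)
    fix i j assume "i < dim_row (map_mat f X)" "j < dim_col (map_mat f X)"
    hence i: "i < n" and j: "j < n" using Xc by auto
    have "adjm cj (map_mat f X) $$ (i,j) = cj (f (X $$ (j,i)))" using i j Xc by simp
    also have "\<dots> = f (sinv (X $$ (j,i)))" by (simp add: f_sinv)
    also have "\<dots> = f (X $$ (i,j))" using e[OF i j] by simp
    finally show "adjm cj (map_mat f X) $$ (i,j) = map_mat f X $$ (i,j)" using i j Xc by simp
  qed (use Xc in auto)
qed

lemma fpos: assumes n: "n > 0" and X: "X \<in> pos n" and v: "v \<in> carrier_vec n"
  shows "\<exists>\<rho>\<ge>0. ip v (map_mat f X *\<^sub>v v) = of_real \<rho>"
proof -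
  have Xc: "X \<in> carrier_mat n n" by (rule pos_carrier[OF n X])
  define A where "A = mat n 1 (\<lambda>(i,j). v $ i)"
  have A: "A \<in> carrier_mat n 1" unfolding A_def by simp
  have Y: "compress scale cj A X \<in> pos 1" by (rule pos_compress[OF n _ A X]) simp
  have Yc: "compress scale cj A X \<in> carrier_mat 1 1" by (rule compress_carrier[OF A])
  have "compress scale cj A X = m1 (compress scale cj A X $$ (0,0))"
    using Yc by (intro eq_matI) (auto simp: m1_def)
  with Y have "m1 (compress scale cj A X $$ (0,0)) \<in> pos 1" by simp
  from f_pos[OF this] obtain \<rho> where \<rho>: "\<rho> \<ge> 0" "f (compress scale cj A X $$ (0,0)) = of_real \<rho>" by blast
  let ?M = "map_mat f X"
  have Mc: "?M \<in> carrier_mat n n" using Xc by simp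
  have AM: "adjm cj A * ?M \<in> carrier_mat 1 n" using A Mc by (metis adjm_carrier mult_carrier_mat)
  have "f (compress scale cj A X $$ (0,0)) = map_mat f (compress scale cj A X) $$ (0,0)" using carrier_matD[OF Yc] by simp
  also have "\<dots> = (adjm cj A * ?M * A) $$ (0,0)"
    unfolding compress_def by (subst map_f_bimul[OF adjm_carrier[OF A] Xc A]) simp
  also have "\<dots> = (\<Sum>b<n. (adjm cj A * ?M) $$ (0,b) * A $$ (b,0))" by (rule mult_idx[OF AM A]) auto
  also have "\<dots> = (\<Sum>b<n. (\<Sum>a<n. cj (v $ a) * ?M $$ (a,b)) * v $ b)"
  proof (rule sum.cong[OF refl])
    fix b assume b: "b \<in> {..<n}"
    have "(adjm cj A * ?M) $$ (0,b) = (\<Sum>a<n. adjm cj A $$ (0,a) * ?M $$ (a,b))"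
      by (rule mult_idx[OF adjm_carrier[OF A] Mc]) (use b in auto)
    also have "\<dots> = (\<Sum>a<n. cj (v $ a) * ?M $$ (a,b))"
      by (rule sum.cong[OF refl]) (use A in \<open>auto simp: A_def\<close>)
    finally show "(adjm cj A * ?M) $$ (0,b) * A $$ (b,0) = (\<Sum>a<n. cj (v $ a) * ?M $$ (a,b)) * v $ b"
      using b by (simp add: A_def)
  qed
  also have "\<dots> = (\<Sum>a<n. \<Sum>b<n. cj (v $ a) * ?M $$ (a,b) * v $ b)"
    by (simp add: sum_distrib_right) (rule sum.swap)
  also have "\<dots> = ip v (?M *\<^sub>v v)"
    unfolding ip_def using v Mc by (simp add: row_sprod sum_distrib_left ac_simps)
  finally show ?thesis using \<rho> by auto
qed


lemma claim1: assumes n: "n > 0" and X: "X \<in> sa_mats sinv n"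
  shows "nrm n X = Inf {opnorm (adjm cj a1 * a1 + adjm cj a2 * a2) | a1 a2 X1 X2.
               a1 \<in> carrier_mat n n \<and> a2 \<in> carrier_mat n n \<and> X1 \<in> K n \<and> X2 \<in> K n \<and>
               X = compress scale cj a1 X1 - compress scale cj a2 X2}" (is "_ = Inf ?S")
proof -
  have Xc: "X \<in> carrier_mat n n" using X unfolding sa_mats_def by auto
  have lb: "nrm n X \<le> y" if "y \<in> ?S" for y
    using that lower[OF n] by auto
  have bdd: "bdd_below ?S" using lb by (intro bdd_belowI) 
  show ?thesis
  proof (cases "nrm n X = 0")
    case True
    hence X0: "X = 0\<^sub>m n n" using nrm_zero_iff[OF n Xc] by simp
    obtain k where k: "k \<in> K n" using K_nonempty[OF n] by blast
    have kc: "k \<in> carrier_mat n n" by (rule K_carrier[OF n k])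
    have Xe: "X = compress scale cj (0\<^sub>m n n) k - compress scale cj (0\<^sub>m n n) k"
      unfolding X0 compress_zero[OF kc] by (intro eq_matI) auto
    have "opnorm (adjm cj (0\<^sub>m n n) * 0\<^sub>m n n + adjm cj (0\<^sub>m n n) * 0\<^sub>m n n :: 'k mat) \<in> ?S"
      unfolding mem_Collect_eq
      by (rule exI[of _ "0\<^sub>m n n"], rule exI[of _ "0\<^sub>m n n"], rule exI[of _ k], rule exI[of _ k]) (use k Xe in simp)
    hence m: "0 \<in> ?S" by (simp add: opnorm_zero del: adjm_zero)
    have "Inf ?S = 0" by (rule cInf_eq_minimum[OF m]) (use lb True in auto)
    thus ?thesis using True by simp
  next
    case False
    hence rp: "nrm n X > 0" using nrm_nonneg[OF n Xc] by linarith
    have elem: "\<exists>y\<in>?S. y \<le> nrm n X * t" if t: "t > 1" for t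
    proof -
      obtain a1 a2 X1 X2 c1 c2 where d: "a1 \<in> carrier_mat n n" "a2 \<in> carrier_mat n n" "X1 \<in> K n" "X2 \<in> K n"
        "X = compress scale cj a1 X1 - compress scale cj a2 X2"
        "adjm cj a1 * a1 + adjm cj a2 * a2 = (of_real (nrm n X) :: 'k) \<cdot>\<^sub>m (c1 * c1 + c2 * c2)"
        "psd_mat cj n c1" "psd_mat cj n c2" "psd_mat cj n (of_real t \<cdot>\<^sub>m 1\<^sub>m n - (c1 * c1 + c2 * c2))"
        using decomp[OF n X rp t] by blast
      have "opnorm (adjm cj a1 * a1 + adjm cj a2 * a2) \<in> ?S" using d(1-5) by blast
      moreover have "opnorm (adjm cj a1 * a1 + adjm cj a2 * a2) \<le> nrm n X * t"
        unfolding d(6) by (rule opn_bound(1)[OF d(7,8,9)]) (use rp t in auto)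
      ultimately show ?thesis by blast
    qed
    have ne: "?S \<noteq> {}" using elem[of 2] by (metis empty_iff one_less_numeral_iff semiring_norm(76))
    have ge: "nrm n X \<le> Inf ?S" by (rule cInf_greatest[OF ne]) (rule lb)
    have le: "Inf ?S \<le> nrm n X"
    proof (rule field_le_epsilon)
      fix e :: real assume e: "e > 0"
      have t1: "1 + e / nrm n X > 1" using e rp by simp
      obtain y where y: "y \<in> ?S" "y \<le> nrm n X * (1 + e / nrm n X)" using elem[OF t1] by blast
      have "Inf ?S \<le> y" by (rule cInf_lower[OF y(1) bdd])
      also have "\<dots> \<le> nrm n X * (1 + e / nrm n X)" by (rule y(2))
      also have "\<dots> = nrm n X + e" using rp by (simp add: field_simps)
      finally show "Inf ?S \<le> nrm n X + e" .
    qed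
    show ?thesis using ge le by simp
  qed
qed

lemma claim2a: assumes n: "n > 0" and X: "X \<in> sa_mats sinv n"
  shows "opnorm (map_mat f X) \<le> nrm n X"
proof -
  have Xc: "X \<in> carrier_mat n n" using X unfolding sa_mats_def by auto
  show ?thesis
  proof (cases "nrm n X = 0")
    case True
    hence X0: "X = 0\<^sub>m n n" using nrm_zero_iff[OF n Xc] by simp
    have "map_mat f X = 0\<^sub>m n n" unfolding X0 by (intro eq_matI) auto
    thus ?thesis using True by (simp add: opnorm_zero)
  next
    case False
    hence rp: "nrm n X > 0" using nrm_nonneg[OF n Xc] by linarith
    have bnd: "opnorm (map_mat f X) \<le> nrm n X * t" if t: "t > 1" for t
    proof -
      obtain c1 c2 where d:
        "map_mat f X = (of_real (nrm n X) :: 'k) \<cdot>\<^sub>m (c1 * c1 - c2 * c2)"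
        "psd_mat cj n c1" "psd_mat cj n c2" "psd_mat cj n (of_real t \<cdot>\<^sub>m 1\<^sub>m n - (c1 * c1 + c2 * c2))"
        using decomp[OF n X rp t] by blast
      show ?thesis unfolding d(1) by (rule opn_bound(2)[OF d(2,3,4)]) (use rp t in auto)
    qed
    show ?thesis
    proof (rule field_le_epsilon)
      fix e :: real assume e: "e > 0"
      have "opnorm (map_mat f X) \<le> nrm n X * (1 + e / nrm n X)" by (rule bnd) (use e rp in auto)
      also have "\<dots> = nrm n X + e" using rp by (simp add: field_simps)
      finally show "opnorm (map_mat f X) \<le> nrm n X + e" .
    qed
  qed
qed


lemma claim2b: assumes n: "n > 0" and X: "X \<in> pos n"
  shows "nrm n X \<le> opnorm (map_mat f X)"
proof -
  have Xc: "X \<in> carrier_mat n n" by (rule pos_carrier[OF n X])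
  define \<beta> where "\<beta> = map_mat f X"
  have \<beta>c: "\<beta> \<in> carrier_mat n n" unfolding \<beta>_def using Xc by simp
  obtain k where k: "k \<in> K n" using K_nonempty[OF n] by blast
  have kc: "k \<in> carrier_mat n n" by (rule K_carrier[OF n k])
  have kpos: "k \<in> pos n" using K_pos[OF n] k by blast
  have fK: "map_mat f Y = 1\<^sub>m n" if "Y \<in> K n" for Y using that K_def[OF n] by blast
  have main: "nrm n X \<le> opnorm \<beta> + 2 * e" if e: "e > 0" for e
  proof -
    define Z where "Z = X + msmul scale (of_real e) k"
    have mk: "msmul scale (of_real e) k \<in> carrier_mat n n" by (rule msmul_carrier[OF kc])
    have Zc: "Z \<in> carrier_mat n n" unfolding Z_def using Xc mk by simp
    have Zpos: "Z \<in> pos n" unfolding Z_def by (rule pos_add[OF n X pos_smult[OF n kpos]]) (use e in simp)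
    define \<beta>' where "\<beta>' = map_mat f Z"
    have \<beta>'c: "\<beta>' \<in> carrier_mat n n" unfolding \<beta>'_def using Zc by simp
    have \<beta>'eq: "\<beta>' = \<beta> + (of_real e :: 'k) \<cdot>\<^sub>m 1\<^sub>m n"
      unfolding \<beta>'_def Z_def \<beta>_def by (simp add: map_f_add[OF Xc mk] map_f_msmul fK[OF k])
    have \<beta>'sa: "adjm cj \<beta>' = \<beta>'" unfolding \<beta>'_def by (rule fsa) (use pos_sa[OF n] Zpos in blast)
    have qf: "ip v (\<beta>' *\<^sub>v v) = ip v (\<beta> *\<^sub>v v) + of_real (e * (vnorm v)^2)" if v: "v \<in> carrier_vec n" for v
    proof -
      have "\<beta>' *\<^sub>v v = \<beta> *\<^sub>v v + (of_real e :: 'k) \<cdot>\<^sub>v v"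
        unfolding \<beta>'eq using v \<beta>c by (simp add: add_mult_distrib_mat_vec[OF \<beta>c _ v] smult_mat_vec)
      thus ?thesis using v \<beta>c carrier_matD[OF \<beta>c] by (simp add: ip_add_right ip_smult_right ip_self)
    qed
    have pd: "\<exists>r>0. ip v (\<beta>' *\<^sub>v v) = of_real r" if v: "v \<in> carrier_vec n" "v \<noteq> 0\<^sub>v n" for v
    proof -
      obtain \<rho> where \<rho>: "\<rho> \<ge> 0" "ip v (\<beta> *\<^sub>v v) = of_real \<rho>" using fpos[OF n X v(1)] unfolding \<beta>_def by blast
      have "vnorm v \<noteq> 0" using vnorm_zero_iff[of v] v by simp
      hence "vnorm v > 0" using vnorm_nonneg[of v] by linarith
      hence "\<rho> + e * (vnorm v)^2 > 0" using \<rho>(1) e by (simp add: add_nonneg_pos)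
      thus ?thesis using qf[OF v(1)] \<rho>(2) by (intro exI[of _ "\<rho> + e * (vnorm v)^2"]) simp
    qed
    obtain b where b: "b \<in> carrier_mat n n" "adjm cj b * \<beta>' * b = 1\<^sub>m n"
      using factor_exists[OF \<beta>'c \<beta>'sa pd] by blast
    define b' where "b' = adjm cj b * \<beta>'"
    have b'c: "b' \<in> carrier_mat n n" unfolding b'_def using b(1) \<beta>'c by (metis adjm_carrier mult_carrier_mat)
    have b'b: "b' * b = 1\<^sub>m n" unfolding b'_def by (rule b(2))
    have bb': "b * b' = 1\<^sub>m n" by (rule mat_mult_left_right_inverse[OF b'c b(1) b'b])
    define Y where "Y = compress scale cj b Z"
    have Ypos: "Y \<in> pos n" unfolding Y_def by (rule pos_compress[OF n n b(1) Zpos])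
    have "map_mat f Y = adjm cj b * \<beta>' * b"
      unfolding Y_def compress_def \<beta>'_def by (rule map_f_bimul[OF adjm_carrier[OF b(1)] Zc b(1)])
    hence "map_mat f Y = 1\<^sub>m n" using b(2) by simp
    hence YK: "Y \<in> K n" using Ypos K_def[OF n] by blast
    have "compress scale cj b' Y = compress scale cj (b * b') Z"
      unfolding Y_def by (rule compress_compress[OF b'c b(1) Zc])
    also have "\<dots> = Z" unfolding bb' by (rule compress_one[OF Zc])
    finally have "Z = compress scale cj b' Y - compress scale cj (0\<^sub>m n n) k"
      unfolding compress_zero[OF kc] using Zc by (intro eq_matI) auto
    hence "nrm n Z \<le> opnorm (adjm cj b' * b' + adjm cj (0\<^sub>m n n) * 0\<^sub>m n n)"
      using lower[OF n b'c zero_carrier_mat YK k] by simp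
    also have "adjm cj b' * b' + adjm cj (0\<^sub>m n n) * 0\<^sub>m n n = adjm cj b' * b'"
      using b'c by (intro eq_matI) auto
    also have "adjm cj b' * b' = \<beta>'"
    proof -
      have ab': "adjm cj b' = \<beta>' * b"
        unfolding b'_def by (simp add: adjm_mult[OF adjm_carrier[OF b(1)] \<beta>'c] \<beta>'sa)
      have "adjm cj b' * b' = \<beta>' * b * b'" unfolding ab' ..
      also have "\<dots> = \<beta>' * (b * b')" by (rule assoc_mult_mat[OF \<beta>'c b(1) b'c])
      also have "\<dots> = \<beta>'" unfolding bb' using \<beta>'c by simp
      finally show ?thesis .
    qed
    also have "opnorm \<beta>' \<le> opnorm \<beta> + e"
    proof (rule polar[OF \<beta>'c \<beta>'sa])
      show "opnorm \<beta> + e \<ge> 0" using opnorm_nonneg[of \<beta>] e by simp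
      fix v :: "'k vec" assume v: "v \<in> carrier_vec n"
      obtain \<rho> where \<rho>: "\<rho> \<ge> 0" "ip v (\<beta> *\<^sub>v v) = of_real \<rho>" using fpos[OF n X v] unfolding \<beta>_def by blast
      have "\<rho> = norm (ip v (\<beta> *\<^sub>v v))" using \<rho> by simp
      also have "\<dots> \<le> vnorm v * vnorm (\<beta> *\<^sub>v v)" by (rule cauchy_schwarz) (use v \<beta>c in simp)
      also have "\<dots> \<le> vnorm v * (opnorm \<beta> * vnorm v)"
        by (rule mult_left_mono[OF opnorm_le]) (use v \<beta>c in simp_all)
      finally have "\<rho> \<le> opnorm \<beta> * (vnorm v)^2" by (simp add: power2_eq_square ac_simps)
      hence "\<bar>\<rho> + e * (vnorm v)^2\<bar> \<le> (opnorm \<beta> + e) * (vnorm v)^2"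
        using \<rho>(1) e by (simp add: algebra_simps)
      thus "\<exists>r. ip v (\<beta>' *\<^sub>v v) = of_real r \<and> \<bar>r\<bar> \<le> (opnorm \<beta> + e) * (vnorm v)^2"
        using qf[OF v] \<rho>(2) by (intro exI[of _ "\<rho> + e * (vnorm v)^2"]) simp
    qed
    finally have nZ: "nrm n Z \<le> opnorm \<beta> + e" .
    have mk': "msmul scale (of_real (- e)) k \<in> carrier_mat n n" by (rule msmul_carrier[OF kc])
    have "X = Z + msmul scale (of_real (- e)) k"
      unfolding Z_def using Xc kc by (intro eq_matI) (auto simp: msmul_def)
    hence "nrm n X \<le> nrm n Z + nrm n (msmul scale (of_real (- e)) k)"
      using nrm_triangle[OF n Zc mk'] by simp
    also have "nrm n (msmul scale (of_real (- e)) k) = e * nrm n k"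
      using nrm_smult[OF n kc] e by simp
    also have "\<dots> \<le> e" using K_nrm[OF n k] e by (simp add: mult_left_le)
    finally show ?thesis using nZ by simp
  qed
  show ?thesis
  proof (rule field_le_epsilon)
    fix e :: real assume "e > 0"
    hence "e / 2 > 0" by simp
    from main[OF this] show "nrm n X \<le> opnorm (map_mat f X) + e" unfolding \<beta>_def by simp
  qed
qed

theorem conclusion: "lemma4p3_conclusion scale cj sinv nrm pos K f"
  unfolding lemma4p3_conclusion_def
proof (intro allI impI conjI ballI)
  fix n :: nat assume n: "n > 0"
  fix X assume X: "X \<in> sa_mats sinv n"
  show "nrm n X = Inf {opnorm (adjm cj a1 * a1 + adjm cj a2 * a2) | a1 a2 X1 X2.
               a1 \<in> carrier_mat n n \<and> a2 \<in> carrier_mat n n \<and> X1 \<in> K n \<and> X2 \<in> K n \<and>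
               X = compress scale cj a1 X1 - compress scale cj a2 X2}"
    by (rule claim1[OF n X])
next
  fix n :: nat assume n: "n > 0"
  fix X assume X: "X \<in> pos n"
  show "nrm n X = opnorm (map_mat f X)"
    using claim2a[OF n] claim2b[OF n X] pos_sa[OF n] X by force
next
  fix n :: nat assume n: "n > 0"
  show "K n = {X \<in> pos n. map_mat f X = 1\<^sub>m n}" by (rule K_def[OF n])
qed

end


lemma cjk_real: "cjk (\<lambda>c::real. c)"
  by unfold_locales (simp_all add: power2_eq_square)

lemma cjk_complex: "cjk cnj"
proof
  fix a b :: complex and r :: real
  show "cnj (a + b) = cnj a + cnj b" by simp
  show "cnj (a * b) = cnj a * cnj b" by simp
  show "cnj (cnj a) = a" by simp
  show "cnj (of_real r) = of_real r" by simp
  have "complex_of_real ((cmod a)^2) = a * cnj a" by (rule complex_norm_square)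
  thus "cnj a * a = of_real ((norm a)^2)" by (simp only: mult.commute)
qed

theorem lemma4p3:
  shows "(\<forall>(scale :: real \<Rightarrow> 'a::ab_group_add \<Rightarrow> 'a) sinv nrm pos K f.
            nc_base_norm_space scale (\<lambda>c. c) sinv nrm pos K f \<longrightarrow>
            lemma4p3_conclusion scale (\<lambda>c. c) sinv nrm pos K f)
       \<and> (\<forall>(scale :: complex \<Rightarrow> 'b::ab_group_add \<Rightarrow> 'b) sinv nrm pos K f.
            nc_base_norm_space scale cnj sinv nrm pos K f \<longrightarrow>
            lemma4p3_conclusion scale cnj sinv nrm pos K f)"
proof (intro conjI allI impI)
  fix scale :: "real \<Rightarrow> 'a::ab_group_add \<Rightarrow> 'a" and sinv nrm pos K f
  assume h: "nc_base_norm_space scale (\<lambda>c. c) sinv nrm pos K f"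
  show "lemma4p3_conclusion scale (\<lambda>c. c) sinv nrm pos K f"
    by (rule ncb.conclusion[OF ncb.intro[OF cjk_real ncb_axioms.intro[OF h]]])
next
  fix scale :: "complex \<Rightarrow> 'b::ab_group_add \<Rightarrow> 'b" and sinv nrm pos K f
  assume h: "nc_base_norm_space scale cnj sinv nrm pos K f"
  show "lemma4p3_conclusion scale cnj sinv nrm pos K f"
    by (rule ncb.conclusion[OF ncb.intro[OF cjk_complex ncb_axioms.intro[OF h]]])
qed

end
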